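(* Let $\mathcal{F}=(\mu_n,\mathcal{S}_n,K_n,\pi_n)_{n\ge1}$ be a family of irreducible, reversible discrete-time finite Markov chains and $\mathcal{F}_c$ the family of associated continuous-time chains (generators $K_n-I$). Assume $\inf_{n,x}K_n(x,x)>1/2$, $\pi_n(|\mu_n/\pi_n|^2)\to\infty$, and that there is $\epsilon_0>0$ such that $T_{n,2}(\mu_n,\epsilon_0)\to\infty$ or $T^{(c)}_{n,2}(\mu_n,\epsilon_0)\to\infty$. Then $\mathcal{F}$ has an $L^2$-cutoff if and only if $\mathcal{F}_c$ has an $L^2$-cutoff.
   Context: $T_{n,2}$ and $T^{(c)}_{n,2}$ are the $L^2$-mixing times of the $n$th chains in $\mathcal{F}$ and $\mathcal{F}_c$: $T_2(\mu,\epsilon)=\min\{t\ge0:d_2(\mu,t)\le\epsilon\}$ where $d_2(\mu,m)=\|\mu K^m/\pi-1\|_{L^2(\pi)}$ (integer $m$) in discrete time and $d_2(\mu,t)=\|\mu e^{t(K-I)}/\pi-1\|_{L^2(\pi)}$ in continuous time, $\|f\|^2_{L^2(\pi)}=\sum_y|f(y)|^2\pi(y)$. $\pi(|\mu/\pi|^2)=\sum_y\mu(y)^2/\pi(y)$. $L^2$-cutoff: there is $t_n>0$ with $d_{n,2}(\mu_n,(1+a)t_n)\to0$ and $d_{n,2}(\mu_n,(1-a)t_n)\to\infty$ for all $a\in(0,1)$ (in discrete time with $\lceil(1+a)t_n\rceil$, $\lfloor(1-a)t_n\rfloor$). *)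

theory Defs
  imports Complex_Main
begin

fun kpow :: "('a \<Rightarrow> 'a \<Rightarrow> real) \<Rightarrow> 'a set \<Rightarrow> nat \<Rightarrow> 'a \<Rightarrow> 'a \<Rightarrow> real" where
  "kpow K S 0 x y = (if x = y then 1 else 0)"
| "kpow K S (Suc m) x y = (\<Sum>z\<in>S. kpow K S m x z * K z y)"

definition prob_on :: "'a set \<Rightarrow> ('a \<Rightarrow> real) \<Rightarrow> bool" where
  "prob_on S p \<longleftrightarrow> (\<forall>x\<in>S. p x \<ge> 0) \<and> (\<Sum>x\<in>S. p x) = 1"

definition markov_kernel :: "'a set \<Rightarrow> ('a \<Rightarrow> 'a \<Rightarrow> real) \<Rightarrow> bool" where
  "markov_kernel S K \<longleftrightarrow> finite S \<and> S \<noteq> {} \<and>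
     (\<forall>x\<in>S. \<forall>y\<in>S. K x y \<ge> 0) \<and> (\<forall>x\<in>S. (\<Sum>y\<in>S. K x y) = 1)"

definition irreducible_chain :: "'a set \<Rightarrow> ('a \<Rightarrow> 'a \<Rightarrow> real) \<Rightarrow> bool" where
  "irreducible_chain S K \<longleftrightarrow> (\<forall>x\<in>S. \<forall>y\<in>S. \<exists>m. kpow K S m x y > 0)"

definition reversible_chain :: "'a set \<Rightarrow> ('a \<Rightarrow> 'a \<Rightarrow> real) \<Rightarrow> ('a \<Rightarrow> real) \<Rightarrow> bool" where
  "reversible_chain S K \<pi> \<longleftrightarrow> prob_on S \<pi> \<and> (\<forall>x\<in>S. \<pi> x > 0) \<and>
     (\<forall>x\<in>S. \<forall>y\<in>S. \<pi> x * K x y = \<pi> y * K y x)"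

text \<open>Distribution at time m (discrete) and at time t (continuous, e^{t(K-I)}).\<close>
definition dist_disc :: "'a set \<Rightarrow> ('a \<Rightarrow> 'a \<Rightarrow> real) \<Rightarrow> ('a \<Rightarrow> real) \<Rightarrow> nat \<Rightarrow> 'a \<Rightarrow> real" where
  "dist_disc S K \<mu> m y = (\<Sum>x\<in>S. \<mu> x * kpow K S m x y)"

definition heat_kernel :: "'a set \<Rightarrow> ('a \<Rightarrow> 'a \<Rightarrow> real) \<Rightarrow> real \<Rightarrow> 'a \<Rightarrow> 'a \<Rightarrow> real" where
  "heat_kernel S K t x y = (\<Sum>k. exp (- t) * t ^ k / fact k * kpow K S k x y)"

definition dist_cont :: "'a set \<Rightarrow> ('a \<Rightarrow> 'a \<Rightarrow> real) \<Rightarrow> ('a \<Rightarrow> real) \<Rightarrow> real \<Rightarrow> 'a \<Rightarrow> real" where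
  "dist_cont S K \<mu> t y = (\<Sum>x\<in>S. \<mu> x * heat_kernel S K t x y)"

definition l2dist :: "'a set \<Rightarrow> ('a \<Rightarrow> real) \<Rightarrow> ('a \<Rightarrow> real) \<Rightarrow> real" where
  "l2dist S \<pi> \<nu> = sqrt (\<Sum>y\<in>S. \<bar>\<nu> y / \<pi> y - 1\<bar>\<^sup>2 * \<pi> y)"

definition d2_disc :: "'a set \<Rightarrow> ('a \<Rightarrow> 'a \<Rightarrow> real) \<Rightarrow> ('a \<Rightarrow> real) \<Rightarrow> ('a \<Rightarrow> real) \<Rightarrow> nat \<Rightarrow> real" where
  "d2_disc S K \<pi> \<mu> m = l2dist S \<pi> (dist_disc S K \<mu> m)"

definition d2_cont :: "'a set \<Rightarrow> ('a \<Rightarrow> 'a \<Rightarrow> real) \<Rightarrow> ('a \<Rightarrow> real) \<Rightarrow> ('a \<Rightarrow> real) \<Rightarrow> real \<Rightarrow> real" where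
  "d2_cont S K \<pi> \<mu> t = l2dist S \<pi> (dist_cont S K \<mu> t)"

definition T2_disc :: "'a set \<Rightarrow> ('a \<Rightarrow> 'a \<Rightarrow> real) \<Rightarrow> ('a \<Rightarrow> real) \<Rightarrow> ('a \<Rightarrow> real) \<Rightarrow> real \<Rightarrow> nat" where
  "T2_disc S K \<pi> \<mu> \<epsilon> = (LEAST m. d2_disc S K \<pi> \<mu> m \<le> \<epsilon>)"

definition T2_cont :: "'a set \<Rightarrow> ('a \<Rightarrow> 'a \<Rightarrow> real) \<Rightarrow> ('a \<Rightarrow> real) \<Rightarrow> ('a \<Rightarrow> real) \<Rightarrow> real \<Rightarrow> real" where
  "T2_cont S K \<pi> \<mu> \<epsilon> = Inf {t. t \<ge> 0 \<and> d2_cont S K \<pi> \<mu> t \<le> \<epsilon>}"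

definition L2_cutoff_disc :: "(nat \<Rightarrow> 'a set) \<Rightarrow> (nat \<Rightarrow> 'a \<Rightarrow> 'a \<Rightarrow> real) \<Rightarrow> (nat \<Rightarrow> 'a \<Rightarrow> real) \<Rightarrow> (nat \<Rightarrow> 'a \<Rightarrow> real) \<Rightarrow> bool" where
  "L2_cutoff_disc S K \<pi> \<mu> \<longleftrightarrow> (\<exists>tn :: nat \<Rightarrow> real. (\<forall>n. tn n > 0) \<and>
     (\<forall>a. 0 < a \<and> a < 1 \<longrightarrow>
        ((\<lambda>n. d2_disc (S n) (K n) (\<pi> n) (\<mu> n) (nat \<lceil>(1 + a) * tn n\<rceil>)) \<longlonglongrightarrow> 0) \<and>
        filterlim (\<lambda>n. d2_disc (S n) (K n) (\<pi> n) (\<mu> n) (nat \<lfloor>(1 - a) * tn n\<rfloor>)) at_top sequentially))"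

definition L2_cutoff_cont :: "(nat \<Rightarrow> 'a set) \<Rightarrow> (nat \<Rightarrow> 'a \<Rightarrow> 'a \<Rightarrow> real) \<Rightarrow> (nat \<Rightarrow> 'a \<Rightarrow> real) \<Rightarrow> (nat \<Rightarrow> 'a \<Rightarrow> real) \<Rightarrow> bool" where
  "L2_cutoff_cont S K \<pi> \<mu> \<longleftrightarrow> (\<exists>tn :: nat \<Rightarrow> real. (\<forall>n. tn n > 0) \<and>
     (\<forall>a. 0 < a \<and> a < 1 \<longrightarrow>
        ((\<lambda>n. d2_cont (S n) (K n) (\<pi> n) (\<mu> n) ((1 + a) * tn n)) \<longlonglongrightarrow> 0) \<and>
        filterlim (\<lambda>n. d2_cont (S n) (K n) (\<pi> n) (\<mu> n) ((1 - a) * tn n)) at_top sequentially))"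

end

theory Submission
  imports Defs "HOL-Computational_Algebra.Fundamental_Theorem_Algebra"
begin

lemma cpoly_add: "poly (map_poly complex_of_real (p + q)) z = poly (map_poly of_real p) z + poly (map_poly of_real q) z"
proof (induction p arbitrary: q)
  case 0 then show ?case by simp
next
  case (pCons a p)
  then show ?case by (cases q) (simp add: map_poly_pCons algebra_simps)
qed

lemma cpoly_smult: "poly (map_poly complex_of_real (smult c p)) z = of_real c * poly (map_poly of_real p) z"
  by (induction p) (simp_all add: map_poly_pCons algebra_simps)

lemma cpoly_mult: "poly (map_poly complex_of_real (p * q)) z = poly (map_poly of_real p) z * poly (map_poly of_real q) z"
  by (induction p) (simp_all add: map_poly_pCons algebra_simps cpoly_add cpoly_smult)

lemma cpoly_real: "poly (map_poly complex_of_real p) (of_real x) = of_real (poly p x)"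
  by (induction p) (auto simp: map_poly_pCons)

lemma quad_root: fixes z :: complex
  shows "poly (map_poly complex_of_real [:(Re z)^2 + (Im z)^2, -2*Re z, 1:]) z = 0"
  by (simp add: map_poly_pCons complex_eq_iff power2_eq_square algebra_simps)

lemma deg1_poly: fixes r :: "real poly" assumes "degree r \<le> 1"
  shows "r = [:coeff r 0, coeff r 1:]"
proof (rule poly_eqI)
  fix n show "coeff r n = coeff [:coeff r 0, coeff r 1:] n"
    using assms by (cases n) (auto simp: coeff_pCons coeff_eq_0 split: nat.splits)
qed

lemma real_poly_factor:
  fixes p :: "real poly" assumes "degree p \<ge> 1"
  shows "(\<exists>r h. p = [:-r,1:] * h) \<or> (\<exists>a b h. b \<noteq> 0 \<and> p = [:a^2+b^2, -2*a, 1:] * h)"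
proof -
  have dm: "degree (map_poly complex_of_real p) = degree p"
    by (rule degree_map_poly) simp
  then have "\<not> constant (poly (map_poly complex_of_real p))"
    using assms constant_degree by force
  then obtain z where z: "poly (map_poly complex_of_real p) z = 0"
    using fundamental_theorem_of_algebra by blast
  show ?thesis
  proof (cases "Im z = 0")
    case True
    then have "z = of_real (Re z)" by (simp add: complex_eq_iff)
    with z have "poly p (Re z) = 0" using cpoly_real by (metis of_real_eq_0_iff)
    then have "[:-Re z,1:] dvd p" using poly_eq_0_iff_dvd by blast
    then show ?thesis unfolding dvd_def by blast
  next
    case False
    define a where "a = Re z"
    define b where "b = Im z"
    define q where "q = [:a^2+b^2, -2*a, 1:]"
    have q0: "q \<noteq> 0" unfolding q_def by simp
    have dq: "degree q = 2" unfolding q_def by simp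
    have qz: "poly (map_poly complex_of_real q) z = 0" unfolding q_def a_def b_def by (rule quad_root)
    define r where "r = p mod q"
    have "p = p div q * q + r" unfolding r_def by simp
    then have "poly (map_poly complex_of_real p) z = poly (map_poly complex_of_real (p div q)) z * poly (map_poly complex_of_real q) z + poly (map_poly complex_of_real r) z"
      by (metis cpoly_add cpoly_mult)
    with z qz have rz: "poly (map_poly complex_of_real r) z = 0" by simp
    have r0: "r = 0"
    proof (rule ccontr)
      assume "r \<noteq> 0"
      then have "degree r < 2" using degree_mod_less[OF q0, of p] dq r_def by auto
      then have "r = [:coeff r 0, coeff r 1:]" using deg1_poly by simp
      then have "poly (map_poly complex_of_real [:coeff r 0, coeff r 1:]) z = 0" using rz by simp
      then have e: "of_real (coeff r 0) + of_real (coeff r 1) * z = 0"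
        by (simp add: map_poly_pCons mult.commute)
      have "Im (of_real (coeff r 0) + of_real (coeff r 1) * z) = coeff r 1 * b" unfolding b_def by simp
      then have "coeff r 1 * b = 0" using e by (metis complex.sel(2) zero_complex.code)
      then have c1: "coeff r 1 = 0" using False b_def by simp
      then have "coeff r 0 = 0" using e by simp
      with c1 \<open>r = [:coeff r 0, coeff r 1:]\<close> \<open>r \<noteq> 0\<close> show False by simp
    qed
    then have "p = q * (p div q)" using \<open>p = p div q * q + r\<close> by (simp add: mult.commute)
    then show ?thesis using False b_def q_def by blast
  qed
qed

lemma lin_dep:
  fixes v :: "'i \<Rightarrow> 'a \<Rightarrow> real"
  assumes "finite S" "finite I" "card S < card I"
  shows "\<exists>c. (\<exists>i\<in>I. c i \<noteq> 0) \<and> (\<forall>x\<in>S. (\<Sum>i\<in>I. c i * v i x) = 0)"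
  using assms
proof (induction S arbitrary: I v rule: finite_induct)
  case empty
  then obtain i where "i \<in> I" by fastforce
  then show ?case by (rule_tac x="\<lambda>_. 1" in exI) auto
next
  case (insert a S)
  show ?case
  proof (cases "\<forall>i\<in>I. v i a = 0")
    case True
    have "card S < card I" using insert by simp
    then obtain c where c: "\<exists>i\<in>I. c i \<noteq> 0" "\<forall>x\<in>S. (\<Sum>i\<in>I. c i * v i x) = 0"
      using insert.IH[of I v] insert.prems by blast
    have "\<forall>x\<in>insert a S. (\<Sum>i\<in>I. c i * v i x) = 0" using c True by simp
    with c show ?thesis by blast
  next
    case False
    then obtain j where j: "j \<in> I" "v j a \<noteq> 0" by blast
    define u where "u i x = v i x - (v i a / v j a) * v j x" for i x
    have "card S < card (I - {j})" using insert j by simp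
    then obtain c where c: "\<exists>i\<in>I-{j}. c i \<noteq> 0" "\<forall>x\<in>S. (\<Sum>i\<in>I-{j}. c i * u i x) = 0"
      using insert.IH[of "I - {j}" u] insert.prems by blast
    define cj where "cj = - (\<Sum>i\<in>I-{j}. c i * v i a) / v j a"
    define c' where "c' i = (if i = j then cj else c i)" for i
    have key: "(\<Sum>i\<in>I. c' i * v i x) = (\<Sum>i\<in>I-{j}. c i * u i x) + (cj + (\<Sum>i\<in>I-{j}. c i * v i a) / v j a) * v j x" for x
    proof -
      have "(\<Sum>i\<in>I. c' i * v i x) = c' j * v j x + (\<Sum>i\<in>I-{j}. c' i * v i x)"
        using j insert.prems by (simp add: sum.remove)
      also have "(\<Sum>i\<in>I-{j}. c' i * v i x) = (\<Sum>i\<in>I-{j}. c i * u i x + c i * v i a / v j a * v j x)"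
        by (rule sum.cong) (auto simp: c'_def u_def algebra_simps)
      also have "\<dots> = (\<Sum>i\<in>I-{j}. c i * u i x) + (\<Sum>i\<in>I-{j}. c i * v i a) / v j a * v j x"
        by (simp add: sum.distrib sum_distrib_right sum_divide_distrib)
      finally show ?thesis by (simp add: c'_def algebra_simps add_divide_distrib)
    qed
    have z: "cj + (\<Sum>i\<in>I-{j}. c i * v i a) / v j a = 0" unfolding cj_def by (simp add: field_simps)
    have "\<forall>x\<in>insert a S. (\<Sum>i\<in>I. c' i * v i x) = 0"
    proof
      fix x assume "x \<in> insert a S"
      then show "(\<Sum>i\<in>I. c' i * v i x) = 0"
      proof
        assume "x = a"
        have "(\<Sum>i\<in>I-{j}. c i * u i a) = 0" unfolding u_def using j by (simp add: algebra_simps)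
        then show ?thesis using key z \<open>x = a\<close> by simp
      next
        assume "x \<in> S" then show ?thesis using key z c by simp
      qed
    qed
    moreover have "\<exists>i\<in>I. c' i \<noteq> 0" using c(1) unfolding c'_def by auto
    ultimately show ?thesis by blast
  qed
qed

locale symop =
  fixes S :: "'a set" and K :: "'a \<Rightarrow> 'a \<Rightarrow> real" and \<pi> :: "'a \<Rightarrow> real"
  assumes finS: "finite S" and pipos: "\<And>x. x \<in> S \<Longrightarrow> \<pi> x > 0"
    and db: "\<And>x y. x \<in> S \<Longrightarrow> y \<in> S \<Longrightarrow> \<pi> x * K x y = \<pi> y * K y x"
begin

definition Aop :: "('a \<Rightarrow> real) \<Rightarrow> 'a \<Rightarrow> real" where
  "Aop g x = (\<Sum>y\<in>S. K x y * g y)"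

definition ip :: "('a \<Rightarrow> real) \<Rightarrow> ('a \<Rightarrow> real) \<Rightarrow> real" where
  "ip f g = (\<Sum>x\<in>S. f x * g x * \<pi> x)"

lemma Aop_add: "Aop (\<lambda>x. f x + g x) = (\<lambda>x. Aop f x + Aop g x)"
  by (rule ext) (simp add: Aop_def algebra_simps sum.distrib)

lemma Aop_scale: "Aop (\<lambda>x. c * f x) = (\<lambda>x. c * Aop f x)"
  by (simp add: fun_eq_iff Aop_def sum_distrib_left mult_ac)

lemma Aop_scale': "Aop (\<lambda>x. f x * c) = (\<lambda>x. Aop f x * c)"
  using Aop_scale[of c f] by (simp add: mult.commute)

lemma Aop_diff: "Aop (\<lambda>x. f x - g x) = (\<lambda>x. Aop f x - Aop g x)"
  by (rule ext) (simp add: Aop_def algebra_simps sum_subtractf)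

lemma Aop_zero: "Aop (\<lambda>x. 0) = (\<lambda>x. 0)"
  by (rule ext) (simp add: Aop_def)

lemma Aop_sum: "Aop (\<lambda>x. \<Sum>i\<in>R. F i x) = (\<lambda>x. \<Sum>i\<in>R. Aop (F i) x)"
  by (rule ext) (simp add: Aop_def sum_distrib_left sum.swap[of _ S])

lemma Aop_cong: "(\<And>x. x \<in> S \<Longrightarrow> f x = g x) \<Longrightarrow> Aop f = Aop g"
  by (rule ext) (simp add: Aop_def)

lemma ip_cong: "(\<And>x. x \<in> S \<Longrightarrow> f x = f' x) \<Longrightarrow> (\<And>x. x \<in> S \<Longrightarrow> g x = g' x) \<Longrightarrow> ip f g = ip f' g'"
  by (simp add: ip_def)

lemma ip_sym: "ip f g = ip g f"
  by (simp add: ip_def mult.commute mult.left_commute)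

lemma ip_sum_left: "ip (\<lambda>x. \<Sum>i\<in>R. F i x) g = (\<Sum>i\<in>R. ip (F i) g)"
  by (simp add: ip_def sum_distrib_right sum.swap[of _ S])

lemma sq_pi_nonneg: "x \<in> S \<Longrightarrow> 0 \<le> g x * g x * \<pi> x"
  using pipos[of x] by simp

lemma ip_nonneg: "ip g g \<ge> 0"
  unfolding ip_def by (rule sum_nonneg) (rule sq_pi_nonneg)

lemma ip_zero: assumes "ip g g = 0" "x \<in> S" shows "g x = 0"
proof -
  have "\<forall>y\<in>S. g y * g y * \<pi> y = 0"
    using assms(1) unfolding ip_def
    by (subst sum_nonneg_eq_0_iff[symmetric]) (auto simp: finS sq_pi_nonneg)
  then show ?thesis using assms(2) pipos[of x] by auto
qed

lemma selfadj: "ip (Aop f) g = ip f (Aop g)"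
proof -
  have "ip (Aop f) g = (\<Sum>x\<in>S. \<Sum>y\<in>S. (\<pi> x * K x y) * f y * g x)"
    by (simp add: ip_def Aop_def sum_distrib_right sum_distrib_left algebra_simps)
  also have "\<dots> = (\<Sum>x\<in>S. \<Sum>y\<in>S. (\<pi> y * K y x) * f y * g x)"
    by (rule sum.cong[OF refl], rule sum.cong[OF refl]) (simp add: db)
  also have "\<dots> = (\<Sum>y\<in>S. \<Sum>x\<in>S. (\<pi> y * K y x) * f y * g x)"
    by (rule sum.swap)
  also have "\<dots> = ip f (Aop g)"
    by (simp add: ip_def Aop_def sum_distrib_right sum_distrib_left algebra_simps)
  finally show ?thesis .
qed

lemma eig_orth:
  assumes "\<And>x. x \<in> S \<Longrightarrow> Aop e x = r * e x" "\<And>x. x \<in> S \<Longrightarrow> Aop e' x = s * e' x" "r \<noteq> s"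
  shows "ip e e' = 0"
proof -
  have "r * ip e e' = ip (Aop e) e'"
    by (subst ip_cong[of "Aop e" "\<lambda>x. r * e x" e' e']) (auto simp: assms ip_def sum_distrib_left algebra_simps)
  also have "\<dots> = ip e (Aop e')" by (rule selfadj)
  also have "\<dots> = s * ip e e'"
    by (subst ip_cong[of e e "Aop e'" "\<lambda>x. s * e' x"]) (auto simp: assms ip_def sum_distrib_left algebra_simps)
  finally show ?thesis using assms(3) by simp
qed

definition pA :: "real poly \<Rightarrow> ('a \<Rightarrow> real) \<Rightarrow> 'a \<Rightarrow> real" where
  "pA p g = fold_coeffs (\<lambda>c h x. c * g x + Aop h x) p (\<lambda>x. 0)"

lemma pA_0[simp]: "pA 0 g = (\<lambda>x. 0)"
  by (simp add: pA_def)

lemma pA_pCons: "pA (pCons a p) g = (\<lambda>x. a * g x + Aop (pA p g) x)"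
  by (cases "p = 0 \<and> a = 0") (auto simp: pA_def Aop_zero)

lemma pA_add: "pA (p + q) g = (\<lambda>x. pA p g x + pA q g x)"
proof (induction p arbitrary: q)
  case 0 then show ?case by simp
next
  case (pCons a p)
  show ?case
  proof (cases q)
    case (pCons b q')
    have "pA (p + q') g = (\<lambda>x. pA p g x + pA q' g x)" by (rule pCons.IH)
    then show ?thesis using pCons by (simp add: pA_pCons Aop_add algebra_simps)
  qed
qed

lemma pA_smult: "pA (smult c p) g = (\<lambda>x. c * pA p g x)"
  by (induction p) (simp_all add: pA_pCons Aop_add Aop_scale algebra_simps)

lemma pA_mult: "pA (p * q) g = pA p (pA q g)"
  by (induction p) (simp_all add: pA_pCons pA_add pA_smult)

lemma pA_gadd: "pA p (\<lambda>x. f x + g x) = (\<lambda>x. pA p f x + pA p g x)"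
  by (induction p) (simp_all add: pA_pCons Aop_add algebra_simps)

lemma pA_gscale: "pA p (\<lambda>x. c * f x) = (\<lambda>x. c * pA p f x)"
  by (induction p) (simp_all add: pA_pCons Aop_scale algebra_simps)

lemma pA_gdiff: "pA p (\<lambda>x. f x - g x) = (\<lambda>x. pA p f x - pA p g x)"
  by (induction p) (simp_all add: pA_pCons Aop_diff algebra_simps)

lemma pA_gzero: "pA p (\<lambda>x. 0) = (\<lambda>x. 0)"
  by (induction p) (simp_all add: pA_pCons Aop_zero)

lemma pA_gsum: "finite R \<Longrightarrow> pA p (\<lambda>x. \<Sum>i\<in>R. F i x) = (\<lambda>x. \<Sum>i\<in>R. pA p (F i) x)"
  by (induction R rule: finite_induct) (simp_all add: pA_gadd pA_gzero)

lemma pA_cong: "(\<And>x. x \<in> S \<Longrightarrow> f x = g x) \<Longrightarrow> x \<in> S \<Longrightarrow> pA p f x = pA p g x"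
proof (induction p arbitrary: x)
  case 0 then show ?case by simp
next
  case (pCons a p)
  have "Aop (pA p f) = Aop (pA p g)" by (rule Aop_cong) (use pCons in auto)
  then show ?case using pCons by (simp add: pA_pCons)
qed

lemma pA_eigen: "(\<And>x. x \<in> S \<Longrightarrow> Aop e x = r * e x) \<Longrightarrow> x \<in> S \<Longrightarrow> pA p e x = poly p r * e x"
proof (induction p arbitrary: x)
  case 0 then show ?case by simp
next
  case (pCons a p)
  have "Aop (pA p e) = Aop (\<lambda>x. poly p r * e x)" by (rule Aop_cong) (use pCons in auto)
  then show ?case using pCons by (simp add: pA_pCons Aop_scale Aop_scale' algebra_simps)
qed

lemma pA_monom: "pA (monom c k) g = (\<lambda>x. c * (Aop ^^ k) g x)"
proof (induction k)
  case 0 then show ?case by (simp add: pA_pCons Aop_zero monom_0)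
next
  case (Suc k) then show ?case by (simp add: monom_Suc pA_pCons Aop_scale)
qed

lemma pA_psum: "finite I \<Longrightarrow> pA (\<Sum>i\<in>I. P i) g = (\<lambda>x. \<Sum>i\<in>I. pA (P i) g x)"
  by (induction I rule: finite_induct) (simp_all add: pA_add)

lemma pA_linear1: "pA [:-r, 1:] f = (\<lambda>x. Aop f x - r * f x)"
  by (simp add: pA_pCons Aop_zero)

lemma pA_quad: "pA [:c0, c1, 1:] f = (\<lambda>x. c0 * f x + c1 * Aop f x + Aop (Aop f) x)"
  by (simp add: pA_pCons Aop_zero Aop_add Aop_scale add.assoc)

end

lemma aux1: "s \<noteq> r \<Longrightarrow> 1/(s-r)*(s*y) - r*(1/(s-r)*y) = (y::real)"
proof -
  assume "s \<noteq> r"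
  then have "s - r \<noteq> 0" by simp
  have "1/(s-r)*(s*y) - r*(1/(s-r)*y) = (s - r) * y / (s - r)" by (simp add: algebra_simps diff_divide_distrib)
  also have "\<dots> = y" using \<open>s - r \<noteq> 0\<close> by simp
  finally show ?thesis .
qed

context symop begin

lemma annihilator: "\<exists>p. p \<noteq> 0 \<and> (\<forall>x\<in>S. pA p f x = 0)"
proof -
  obtain c where c: "\<exists>i\<in>{..card S}. c i \<noteq> 0" "\<forall>x\<in>S. (\<Sum>i\<in>{..card S}. c i * (Aop ^^ i) f x) = 0"
    using lin_dep[of S "{..card S}" "\<lambda>i. (Aop ^^ i) f"] finS by auto
  define p where "p = (\<Sum>i\<in>{..card S}. monom (c i) i)"
  have cp: "coeff p k = (if k \<le> card S then c k else 0)" for k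
    unfolding p_def by (simp add: coeff_sum coeff_monom)
  have "p \<noteq> 0" using c(1) cp by (metis atMost_iff coeff_0)
  moreover have "pA p f = (\<lambda>x. \<Sum>i\<in>{..card S}. c i * (Aop ^^ i) f x)"
    unfolding p_def by (simp add: pA_psum pA_monom)
  ultimately show ?thesis using c(2) by auto
qed

definition eigdec :: "('a \<Rightarrow> real) \<Rightarrow> real set \<Rightarrow> (real \<Rightarrow> 'a \<Rightarrow> real) \<Rightarrow> bool" where
  "eigdec f R e \<longleftrightarrow> finite R \<and> (\<forall>r\<in>R. \<forall>x\<in>S. Aop (e r) x = r * e r x) \<and> (\<forall>x\<in>S. f x = (\<Sum>r\<in>R. e r x))"

lemma eigdec_real:
  assumes dec: "eigdec f' R e" and f': "\<And>x. x \<in> S \<Longrightarrow> f' x = Aop f x - r * f x"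
  shows "\<exists>R e. eigdec f R e"
proof -
  have fin: "finite R" and eig: "\<And>s x. s \<in> R \<Longrightarrow> x \<in> S \<Longrightarrow> Aop (e s) x = s * e s x"
    and sm: "\<And>x. x \<in> S \<Longrightarrow> f' x = (\<Sum>s\<in>R. e s x)" using dec unfolding eigdec_def by auto
  have er0: "e r x = 0" if "r \<in> R" "x \<in> S" for x
  proof -
    have "ip f' (e r) = (\<Sum>s\<in>R. ip (e s) (e r))"
      by (subst ip_cong[of f' "\<lambda>x. \<Sum>s\<in>R. e s x" "e r" "e r"]) (auto simp: sm ip_sum_left)
    also have "\<dots> = ip (e r) (e r)"
    proof -
      have "(\<Sum>s\<in>R. ip (e s) (e r)) = ip (e r) (e r) + (\<Sum>s\<in>R-{r}. ip (e s) (e r))"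
        using that fin by (simp add: sum.remove)
      also have "(\<Sum>s\<in>R-{r}. ip (e s) (e r)) = 0"
        by (rule sum.neutral) (use eig that in \<open>auto intro!: eig_orth\<close>)
      finally show ?thesis by simp
    qed
    finally have 1: "ip f' (e r) = ip (e r) (e r)" .
    have "ip f' (e r) = ip (\<lambda>x. Aop f x + (-r) * f x) (e r)"
      by (rule ip_cong) (auto simp: f')
    also have "\<dots> = ip (Aop f) (e r) - r * ip f (e r)"
      by (simp add: ip_def sum.distrib sum_distrib_left algebra_simps sum_subtractf)
    also have "ip (Aop f) (e r) = ip f (Aop (e r))" by (rule selfadj)
    also have "\<dots> = ip f (\<lambda>x. r * e r x)" by (rule ip_cong) (auto simp: eig that)
    also have "\<dots> = r * ip f (e r)" by (simp add: ip_def sum_distrib_left algebra_simps)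
    finally have "ip (e r) (e r) = 0" using 1 by simp
    then show ?thesis using ip_zero that by blast
  qed
  define u where "u x = (\<Sum>s\<in>R-{r}. (1 / (s - r)) * e s x)" for x
  have Au: "Aop u x - r * u x = f' x" if "x \<in> S" for x
  proof -
    have "Aop u x = (\<Sum>s\<in>R-{r}. (1 / (s - r)) * Aop (e s) x)"
      unfolding u_def by (simp only: Aop_sum Aop_scale)
    also have "\<dots> = (\<Sum>s\<in>R-{r}. (1 / (s - r)) * (s * e s x))"
      by (rule sum.cong) (auto simp: eig that)
    finally have "Aop u x - r * u x = (\<Sum>s\<in>R-{r}. (1 / (s - r)) * (s * e s x) - r * ((1 / (s - r)) * e s x))"
      unfolding u_def by (simp add: sum_subtractf sum_distrib_left)
    also have "\<dots> = (\<Sum>s\<in>R-{r}. e s x)"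
      by (rule sum.cong[OF refl], rule aux1) auto
    also have "\<dots> = (\<Sum>s\<in>R. e s x)"
    proof (cases "r \<in> R")
      case True then show ?thesis using fin er0[OF True that] by (simp add: sum.remove)
    next
      case False then show ?thesis by simp
    qed
    finally show ?thesis using sm that by simp
  qed
  define w where "w x = f x - u x" for x
  have Aw: "Aop w x = r * w x" if "x \<in> S" for x
  proof -
    have "Aop w x = Aop f x - Aop u x" unfolding w_def by (simp add: Aop_diff)
    then show ?thesis using Au[OF that] f'[OF that] unfolding w_def by (simp add: algebra_simps)
  qed
  define e' where "e' s = (if s = r then w else (\<lambda>x. (1 / (s - r)) * e s x))" for s
  have "eigdec f (insert r R) e'"
    unfolding eigdec_def
  proof (intro conjI ballI)
    show "finite (insert r R)" using fin by simp
  next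
    fix s x assume "s \<in> insert r R" "x \<in> S"
    then show "Aop (e' s) x = s * e' s x"
    proof (cases "s = r")
      case True then show ?thesis using Aw \<open>x \<in> S\<close> by (simp add: e'_def)
    next
      case False
      then have "e' s = (\<lambda>x. (1 / (s - r)) * e s x)" by (simp add: e'_def)
      then show ?thesis using False \<open>s \<in> insert r R\<close> \<open>x \<in> S\<close> by (simp only: Aop_scale) (simp add: eig)
    qed
  next
    fix x assume x: "x \<in> S"
    have "(\<Sum>s\<in>insert r R. e' s x) = e' r x + (\<Sum>s\<in>R-{r}. e' s x)"
      using fin by (simp add: sum.insert_remove)
    also have "(\<Sum>s\<in>R-{r}. e' s x) = u x"
      unfolding u_def by (rule sum.cong) (auto simp: e'_def)
    finally show "f x = (\<Sum>s\<in>insert r R. e' s x)" by (simp add: e'_def w_def)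
  qed
  then show ?thesis by blast
qed

lemma eigdec_quad:
  assumes dec: "eigdec f' R e" and b: "b \<noteq> 0"
    and f': "\<And>x. x \<in> S \<Longrightarrow> f' x = pA [:a^2+b^2, -2*a, 1:] f x"
  shows "\<exists>R e. eigdec f R e"
proof -
  define q where "q = [:a^2+b^2, -2*a, 1:]"
  have fin: "finite R" and eig: "\<And>s x. s \<in> R \<Longrightarrow> x \<in> S \<Longrightarrow> Aop (e s) x = s * e s x"
    and sm: "\<And>x. x \<in> S \<Longrightarrow> f' x = (\<Sum>s\<in>R. e s x)" using dec unfolding eigdec_def by auto
  have qpos: "poly q s > 0" for s
  proof -
    have "poly q s = (s - a)^2 + b^2" unfolding q_def by (simp add: power2_eq_square algebra_simps)
    moreover have "b^2 > 0" using b by simp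
    ultimately show ?thesis by (smt (verit) zero_le_power2)
  qed
  define u where "u x = (\<Sum>s\<in>R. (1 / poly q s) * e s x)" for x
  have qu: "pA q u x = f' x" if "x \<in> S" for x
  proof -
    have "pA q u x = (\<Sum>s\<in>R. (1 / poly q s) * pA q (e s) x)"
      unfolding u_def by (simp only: pA_gsum[OF fin] pA_gscale)
    also have "\<dots> = (\<Sum>s\<in>R. e s x)"
    proof (rule sum.cong[OF refl])
      fix s assume s: "s \<in> R"
      have "pA q (e s) x = poly q s * e s x" by (rule pA_eigen) (use eig s that in auto)
      then show "1 / poly q s * pA q (e s) x = e s x" using qpos[of s] by simp
    qed
    finally show ?thesis using sm that by simp
  qed
  define w where "w x = f x - u x" for x
  have qw: "pA q w x = 0" if "x \<in> S" for x
    unfolding w_def pA_gdiff using qu[OF that] f'[OF that] q_def by simp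
  have "ip (pA q w) w = 0" by (simp add: ip_def qw)
  moreover have "ip (pA q w) w = ip (\<lambda>x. Aop w x - a * w x) (\<lambda>x. Aop w x - a * w x) + b^2 * ip w w"
  proof -
    have s1: "ip (Aop (Aop w)) w = ip (Aop w) (Aop w)" by (rule selfadj)
    have s2: "ip w (Aop w) = ip (Aop w) w" by (rule ip_sym)
    have "ip (pA q w) w = (a^2+b^2) * ip w w - 2*a * ip (Aop w) w + ip (Aop (Aop w)) w"
      unfolding q_def pA_quad by (simp add: ip_def sum.distrib sum_distrib_left algebra_simps sum_subtractf)
    moreover have "ip (\<lambda>x. Aop w x - a * w x) (\<lambda>x. Aop w x - a * w x) = ip (Aop w) (Aop w) - a * ip (Aop w) w - a * ip w (Aop w) + a^2 * ip w w"
      by (simp add: ip_def sum.distrib sum_distrib_left algebra_simps sum_subtractf power2_eq_square)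
    ultimately show ?thesis using s1 s2 by (simp add: algebra_simps power2_eq_square)
  qed
  ultimately have "b^2 * ip w w \<le> 0" using ip_nonneg[of "\<lambda>x. Aop w x - a * w x"] by linarith
  then have "ip w w = 0" using ip_nonneg[of w] b
    by (metis mult_le_0_iff not_le order_antisym zero_less_power2)
  then have w0: "\<And>x. x \<in> S \<Longrightarrow> w x = 0" using ip_zero by blast
  define e' where "e' s = (\<lambda>x. (1 / poly q s) * e s x)" for s
  have "eigdec f R e'"
    unfolding eigdec_def
  proof (intro conjI ballI)
    show "finite R" by (rule fin)
  next
    fix s x assume "s \<in> R" "x \<in> S"
    then show "Aop (e' s) x = s * e' s x" by (simp only: e'_def Aop_scale) (simp add: eig)
  next
    fix x assume x: "x \<in> S"
    show "f x = (\<Sum>s\<in>R. e' s x)" using w0[OF x] unfolding w_def u_def e'_def by simp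
  qed
  then show ?thesis by blast
qed

lemma spectral_ind:
  "p \<noteq> 0 \<Longrightarrow> (\<forall>x\<in>S. pA p f x = 0) \<Longrightarrow> \<exists>R e. eigdec f R e"
proof (induction "degree p" arbitrary: p f rule: less_induct)
  case less
  show ?case
  proof (cases "degree p = 0")
    case True
    then obtain c where p: "p = [:c:]" by (metis degree_eq_zeroE)
    with less.prems have c: "c \<noteq> 0" by simp
    have "f x = 0" if "x \<in> S" for x
      using less.prems(2) that c by (simp add: p pA_pCons Aop_zero)
    then have "eigdec f {} e" for e unfolding eigdec_def by simp
    then show ?thesis by blast
  next
    case False
    then have "degree p \<ge> 1" by simp
    from real_poly_factor[OF this] show ?thesis
    proof
      assume "\<exists>r h. p = [:-r,1:] * h"
      then obtain r h where ph: "p = [:-r,1:] * h" by blast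
      then have h0: "h \<noteq> 0" using less.prems by auto
      have "degree p = degree [:-r,1:] + degree h" unfolding ph by (rule degree_mult_eq) (use h0 in auto)
      then have dh: "degree h < degree p" by simp
      define f' where "f' = pA [:-r,1:] f"
      have "\<forall>x\<in>S. pA h f' x = 0"
        using less.prems(2) unfolding f'_def ph by (simp add: pA_mult[symmetric] mult.commute)
      from less.hyps[OF dh h0 this] obtain R e where "eigdec f' R e" by blast
      then show ?thesis by (rule eigdec_real[of f' R e f r]) (simp add: f'_def pA_linear1)
    next
      assume "\<exists>a b h. b \<noteq> 0 \<and> p = [:a^2+b^2, -2*a, 1:] * h"
      then obtain a b h where b: "b \<noteq> 0" and ph: "p = [:a^2+b^2, -2*a, 1:] * h" by blast
      then have h0: "h \<noteq> 0" using less.prems by auto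
      have "degree p = degree [:a^2+b^2, -2*a, 1:] + degree h" unfolding ph by (rule degree_mult_eq) (use h0 in auto)
      then have dh: "degree h < degree p" by simp
      define f' where "f' = pA [:a^2+b^2, -2*a, 1:] f"
      have "\<forall>x\<in>S. pA h f' x = 0"
        using less.prems(2) unfolding f'_def ph by (simp add: pA_mult[symmetric] mult.commute)
      from less.hyps[OF dh h0 this] obtain R e where "eigdec f' R e" by blast
      then show ?thesis by (rule eigdec_quad[OF _ b]) (simp add: f'_def)
    qed
  qed
qed

lemma spectral: "\<exists>R e. eigdec f R e"
  using annihilator[of f] spectral_ind by blast

end

locale mchain =
  fixes S :: "'a set" and K :: "'a \<Rightarrow> 'a \<Rightarrow> real" and \<pi> :: "'a \<Rightarrow> real" and \<mu> :: "'a \<Rightarrow> real" and c :: real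
  assumes mk: "markov_kernel S K" and rv: "reversible_chain S K \<pi>" and pr: "prob_on S \<mu>"
    and c: "c > 1/2" and lazy: "\<And>x. x \<in> S \<Longrightarrow> c \<le> K x x"
begin

lemma finS: "finite S" using mk unfolding markov_kernel_def by auto
lemma Knn: "x \<in> S \<Longrightarrow> y \<in> S \<Longrightarrow> 0 \<le> K x y" using mk unfolding markov_kernel_def by auto
lemma Krow: "x \<in> S \<Longrightarrow> (\<Sum>y\<in>S. K x y) = 1" using mk unfolding markov_kernel_def by auto
lemma pipos: "x \<in> S \<Longrightarrow> 0 < \<pi> x" using rv unfolding reversible_chain_def by auto
lemma db: "x \<in> S \<Longrightarrow> y \<in> S \<Longrightarrow> \<pi> x * K x y = \<pi> y * K y x" using rv unfolding reversible_chain_def by auto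
lemma pisum: "(\<Sum>x\<in>S. \<pi> x) = 1" using rv unfolding reversible_chain_def prob_on_def by auto
lemma musum: "(\<Sum>x\<in>S. \<mu> x) = 1" using pr unfolding prob_on_def by auto

sublocale symop S K \<pi> by unfold_locales (auto simp: finS pipos db)

lemma stat: "y \<in> S \<Longrightarrow> (\<Sum>x\<in>S. \<pi> x * K x y) = \<pi> y"
proof -
  assume y: "y \<in> S"
  have "(\<Sum>x\<in>S. \<pi> x * K x y) = (\<Sum>x\<in>S. \<pi> y * K y x)" by (rule sum.cong) (auto simp: db y)
  also have "\<dots> = \<pi> y" by (simp add: sum_distrib_left[symmetric] Krow y)
  finally show ?thesis .
qed

lemma sum_ind1: "a \<in> S \<Longrightarrow> (\<Sum>z\<in>S. (if a = z then 1 else 0) * f z) = (f a :: real)"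
proof -
  assume a: "a \<in> S"
  have "(\<Sum>z\<in>S. (if a = z then 1 else 0) * f z) = (\<Sum>z\<in>S. if a = z then f z else 0)" by (rule sum.cong) auto
  then show ?thesis using a finS by simp
qed

lemma sum_ind2: "a \<in> S \<Longrightarrow> (\<Sum>z\<in>S. f z * (if z = a then 1 else 0)) = (f a :: real)"
proof -
  assume a: "a \<in> S"
  have "(\<Sum>z\<in>S. f z * (if z = a then 1 else 0)) = (\<Sum>z\<in>S. if z = a then f z else 0)" by (rule sum.cong) auto
  then show ?thesis using a finS by simp
qed

lemma kpow_Suc_left: "x \<in> S \<Longrightarrow> y \<in> S \<Longrightarrow> kpow K S (Suc m) x y = (\<Sum>z\<in>S. K x z * kpow K S m z y)"
proof (induction m arbitrary: y)
  case 0
  have "kpow K S (Suc 0) x y = K x y" using sum_ind1[OF 0(1), of "\<lambda>z. K z y"] by simp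
  moreover have "(\<Sum>z\<in>S. K x z * kpow K S 0 z y) = K x y" using sum_ind2[OF 0(2), of "K x"] by simp
  ultimately show ?case by simp
next
  case (Suc m)
  have "kpow K S (Suc (Suc m)) x y = (\<Sum>z\<in>S. kpow K S (Suc m) x z * K z y)"
    by (rule kpow.simps(2))
  also have "\<dots> = (\<Sum>z\<in>S. (\<Sum>w\<in>S. K x w * kpow K S m w z) * K z y)"
  proof (rule sum.cong[OF refl])
    fix z assume z: "z \<in> S"
    show "kpow K S (Suc m) x z * K z y = (\<Sum>w\<in>S. K x w * kpow K S m w z) * K z y"
      by (simp only: Suc.IH[OF Suc.prems(1) z])
  qed
  also have "\<dots> = (\<Sum>z\<in>S. \<Sum>w\<in>S. K x w * (kpow K S m w z * K z y))"
    by (simp only: sum_distrib_right mult.assoc)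
  also have "\<dots> = (\<Sum>w\<in>S. \<Sum>z\<in>S. K x w * (kpow K S m w z * K z y))" by (rule sum.swap)
  also have "\<dots> = (\<Sum>w\<in>S. K x w * (\<Sum>z\<in>S. kpow K S m w z * K z y))"
    by (simp only: sum_distrib_left)
  also have "\<dots> = (\<Sum>w\<in>S. K x w * kpow K S (Suc m) w y)" by simp
  finally show ?case .
qed

lemma kpow_nonneg: "x \<in> S \<Longrightarrow> y \<in> S \<Longrightarrow> 0 \<le> kpow K S m x y"
  by (induction m arbitrary: y) (auto intro!: sum_nonneg mult_nonneg_nonneg Knn)

lemma kpow_row: "x \<in> S \<Longrightarrow> (\<Sum>y\<in>S. kpow K S m x y) = 1"
proof (induction m)
  case 0 then show ?case by (simp add: finS)
next
  case (Suc m)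
  have "(\<Sum>y\<in>S. kpow K S (Suc m) x y) = (\<Sum>y\<in>S. \<Sum>z\<in>S. kpow K S m x z * K z y)"
    by (simp only: kpow.simps(2))
  also have "\<dots> = (\<Sum>z\<in>S. \<Sum>y\<in>S. kpow K S m x z * K z y)" by (rule sum.swap)
  also have "\<dots> = (\<Sum>z\<in>S. kpow K S m x z * (\<Sum>y\<in>S. K z y))"
    by (simp only: sum_distrib_left)
  also have "\<dots> = (\<Sum>z\<in>S. kpow K S m x z)" by (rule sum.cong) (auto simp: Krow)
  finally show ?case using Suc by simp
qed

lemma kpow_le1: "x \<in> S \<Longrightarrow> y \<in> S \<Longrightarrow> kpow K S m x y \<le> 1"
proof -
  assume x: "x \<in> S" and y: "y \<in> S"
  have "kpow K S m x y \<le> (\<Sum>z\<in>S. kpow K S m x z)"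
    by (rule member_le_sum) (auto simp: finS y kpow_nonneg x)
  then show ?thesis using kpow_row[OF x] by simp
qed

lemma kpow_rev: "x \<in> S \<Longrightarrow> y \<in> S \<Longrightarrow> \<pi> x * kpow K S m x y = \<pi> y * kpow K S m y x"
proof (induction m arbitrary: x y)
  case 0 then show ?case by auto
next
  case (Suc m)
  have "\<pi> x * kpow K S (Suc m) x y = (\<Sum>z\<in>S. (\<pi> x * kpow K S m x z) * K z y)"
    by (simp add: sum_distrib_left mult.assoc)
  also have "\<dots> = (\<Sum>z\<in>S. kpow K S m z x * (\<pi> z * K z y))"
    by (rule sum.cong) (auto simp: Suc.IH Suc.prems algebra_simps)
  also have "\<dots> = (\<Sum>z\<in>S. kpow K S m z x * (\<pi> y * K y z))"
    by (rule sum.cong) (auto simp: db Suc.prems)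
  also have "\<dots> = \<pi> y * (\<Sum>z\<in>S. K y z * kpow K S m z x)"
    by (simp add: sum_distrib_left algebra_simps)
  also have "\<dots> = \<pi> y * kpow K S (Suc m) y x" using kpow_Suc_left[of y x m] Suc.prems by simp
  finally show ?case .
qed

lemma Apow_kpow: "y \<in> S \<Longrightarrow> (Aop ^^ m) g y = (\<Sum>x\<in>S. kpow K S m y x * g x)"
proof (induction m arbitrary: g)
  case 0 then show ?case using sum_ind1[OF 0, of g] by simp
next
  case (Suc m)
  have "(Aop ^^ Suc m) g y = (Aop ^^ m) (Aop g) y" by (simp only: funpow_Suc_right comp_apply)
  also have "\<dots> = (\<Sum>x\<in>S. kpow K S m y x * Aop g x)" by (rule Suc.IH[OF Suc.prems])
  also have "\<dots> = (\<Sum>x\<in>S. kpow K S m y x * (\<Sum>z\<in>S. K x z * g z))"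
    by (simp add: Aop_def)
  also have "\<dots> = (\<Sum>x\<in>S. \<Sum>z\<in>S. kpow K S m y x * K x z * g z)"
    by (simp only: sum_distrib_left mult.assoc)
  also have "\<dots> = (\<Sum>z\<in>S. \<Sum>x\<in>S. kpow K S m y x * K x z * g z)"
    by (rule sum.swap)
  also have "\<dots> = (\<Sum>z\<in>S. (\<Sum>x\<in>S. kpow K S m y x * K x z) * g z)"
    by (simp only: sum_distrib_right)
  also have "\<dots> = (\<Sum>z\<in>S. kpow K S (Suc m) y z * g z)" by simp
  finally show ?case .
qed

lemma Apow_eigen: "(\<And>x. x \<in> S \<Longrightarrow> Aop e x = r * e x) \<Longrightarrow> y \<in> S \<Longrightarrow> (Aop ^^ m) e y = r ^ m * e y"
proof (induction m arbitrary: y)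
  case 0 then show ?case by simp
next
  case (Suc m)
  have "(Aop ^^ Suc m) e y = Aop ((Aop ^^ m) e) y" by simp
  also have "Aop ((Aop ^^ m) e) = Aop (\<lambda>x. r ^ m * e x)" by (rule Aop_cong) (use Suc in auto)
  finally show ?case using Suc by (simp add: Aop_scale)
qed

definition f0 :: "'a \<Rightarrow> real" where "f0 x = \<mu> x / \<pi> x - 1"

lemma dist_disc_f0: "y \<in> S \<Longrightarrow> dist_disc S K \<mu> m y / \<pi> y - 1 = (Aop ^^ m) f0 y"
proof -
  assume y: "y \<in> S"
  have "dist_disc S K \<mu> m y / \<pi> y = (\<Sum>x\<in>S. kpow K S m y x * (\<mu> x / \<pi> x))"
    unfolding dist_disc_def sum_divide_distrib
  proof (rule sum.cong[OF refl])
    fix x assume x: "x \<in> S"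
    have "kpow K S m x y = \<pi> y * kpow K S m y x / \<pi> x"
      using kpow_rev[OF x y, of m] pipos[OF x] by (simp add: field_simps)
    then show "\<mu> x * kpow K S m x y / \<pi> y = kpow K S m y x * (\<mu> x / \<pi> x)"
      using pipos[OF x] pipos[OF y] by simp
  qed
  also have "\<dots> = (\<Sum>x\<in>S. kpow K S m y x * f0 x + kpow K S m y x)"
    by (rule sum.cong) (auto simp: f0_def algebra_simps)
  also have "\<dots> = (\<Sum>x\<in>S. kpow K S m y x * f0 x) + (\<Sum>x\<in>S. kpow K S m y x)"
    by (rule sum.distrib)
  also have "\<dots> = (Aop ^^ m) f0 y + 1" by (simp add: Apow_kpow y kpow_row)
  finally show ?thesis by simp
qed

lemma quad_bounds: "(2 * c - 1) * ip g g \<le> ip (Aop g) g \<and> ip (Aop g) g \<le> ip g g"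
proof -
  define Q where "Q s = (\<Sum>x\<in>S. \<Sum>y\<in>S. \<pi> x * K x y * (g x + s * g y)^2)" for s :: real
  have t1: "(\<Sum>x\<in>S. \<Sum>y\<in>S. \<pi> x * K x y * (g x)^2) = ip g g"
    unfolding ip_def
  proof (rule sum.cong[OF refl])
    fix x assume x: "x \<in> S"
    have "(\<Sum>y\<in>S. \<pi> x * K x y * (g x)^2) = (\<Sum>y\<in>S. K x y * (\<pi> x * (g x)^2))"
      by (rule sum.cong) auto
    also have "\<dots> = (\<Sum>y\<in>S. K x y) * (\<pi> x * (g x)^2)" by (rule sum_distrib_right[symmetric])
    finally have "(\<Sum>y\<in>S. \<pi> x * K x y * (g x)^2) = \<pi> x * (g x)^2 * (\<Sum>y\<in>S. K x y)" by simp
    then show "(\<Sum>y\<in>S. \<pi> x * K x y * (g x)^2) = g x * g x * \<pi> x" using Krow[OF x] by (simp add: power2_eq_square)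
  qed
  have t2: "(\<Sum>x\<in>S. \<Sum>y\<in>S. \<pi> x * K x y * (g y)^2) = ip g g"
  proof -
    have "(\<Sum>x\<in>S. \<Sum>y\<in>S. \<pi> x * K x y * (g y)^2) = (\<Sum>y\<in>S. \<Sum>x\<in>S. \<pi> x * K x y * (g y)^2)"
      by (rule sum.swap)
    also have "\<dots> = (\<Sum>y\<in>S. (\<Sum>x\<in>S. \<pi> x * K x y) * (g y)^2)"
      by (simp only: sum_distrib_right)
    also have "\<dots> = ip g g" unfolding ip_def by (rule sum.cong) (auto simp: stat power2_eq_square)
    finally show ?thesis .
  qed
  have t3: "(\<Sum>x\<in>S. \<Sum>y\<in>S. \<pi> x * K x y * (g x * g y)) = ip (Aop g) g"
    unfolding ip_def Aop_def
  proof (rule sum.cong[OF refl])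
    fix x assume "x \<in> S"
    have "(\<Sum>y\<in>S. \<pi> x * K x y * (g x * g y)) = (\<Sum>y\<in>S. K x y * g y * (g x * \<pi> x))"
      by (rule sum.cong) auto
    also have "\<dots> = (\<Sum>y\<in>S. K x y * g y) * (g x * \<pi> x)" by (rule sum_distrib_right[symmetric])
    finally show "(\<Sum>y\<in>S. \<pi> x * K x y * (g x * g y)) = (\<Sum>y\<in>S. K x y * g y) * g x * \<pi> x" by simp
  qed
  have Qs: "Q s = ip g g + 2 * s * ip (Aop g) g + s^2 * ip g g" for s
  proof -
    have "Q s = (\<Sum>x\<in>S. \<Sum>y\<in>S. \<pi> x * K x y * (g x)^2 + 2 * s * (\<pi> x * K x y * (g x * g y)) + s^2 * (\<pi> x * K x y * (g y)^2))"
      unfolding Q_def by (rule sum.cong[OF refl], rule sum.cong[OF refl]) (simp add: power2_eq_square algebra_simps)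
    also have "\<dots> = (\<Sum>x\<in>S. \<Sum>y\<in>S. \<pi> x * K x y * (g x)^2) + 2 * s * (\<Sum>x\<in>S. \<Sum>y\<in>S. \<pi> x * K x y * (g x * g y))
        + s^2 * (\<Sum>x\<in>S. \<Sum>y\<in>S. \<pi> x * K x y * (g y)^2)"
      by (simp only: sum.distrib sum_distrib_left)
    finally show ?thesis using t1 t2 t3 by simp
  qed
  have Qnn: "0 \<le> Q s" for s
    unfolding Q_def by (intro sum_nonneg mult_nonneg_nonneg) (auto simp: Knn less_imp_le[OF pipos])
  have Qdiag: "4 * c * ip g g \<le> Q 1"
  proof -
    have "4 * c * ip g g = (\<Sum>x\<in>S. \<pi> x * c * (2 * g x)^2)"
      unfolding ip_def by (simp add: sum_distrib_left power2_eq_square algebra_simps)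
    also have "\<dots> \<le> (\<Sum>x\<in>S. \<pi> x * K x x * (g x + 1 * g x)^2)"
    proof (rule sum_mono)
      fix x assume x: "x \<in> S"
      have "\<pi> x * c \<le> \<pi> x * K x x" using lazy[OF x] pipos[OF x] by simp
      then show "\<pi> x * c * (2 * g x)\<^sup>2 \<le> \<pi> x * K x x * (g x + 1 * g x)\<^sup>2"
        by (simp add: mult_right_mono)
    qed
    also have "\<dots> \<le> Q 1" unfolding Q_def
      by (rule sum_mono, rule member_le_sum) (auto simp: Knn less_imp_le[OF pipos] finS)
    finally show ?thesis .
  qed
  have q1: "Q 1 = 2 * ip g g + 2 * ip (Aop g) g" using Qs[of 1] by simp
  have q2: "Q (-1) = 2 * ip g g - 2 * ip (Aop g) g" using Qs[of "-1"] by simp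
  have e1: "(2 * c - 1) * ip g g = 2 * (c * ip g g) - ip g g" by (simp add: algebra_simps)
  have e2: "4 * c * ip g g = 4 * (c * ip g g)" by simp
  show ?thesis using q1 q2 e1 e2 Qnn[of "-1"] Qdiag by linarith
qed

lemma eig_range:
  assumes "\<And>x. x \<in> S \<Longrightarrow> Aop e x = r * e x" "0 < ip e e"
  shows "2 * c - 1 \<le> r \<and> r \<le> 1"
proof -
  have "ip (Aop e) e = ip (\<lambda>x. r * e x) e" by (rule ip_cong) (auto simp: assms)
  also have "\<dots> = r * ip e e" by (simp add: ip_def sum_distrib_left algebra_simps)
  finally have "ip (Aop e) e = r * ip e e" .
  then have h1: "(2 * c - 1) * ip e e \<le> r * ip e e" and h2: "r * ip e e \<le> 1 * ip e e"
    using quad_bounds[of e] by auto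
  show ?thesis using mult_right_le_imp_le[OF h1 assms(2)] mult_right_le_imp_le[OF h2 assms(2)] by simp
qed

end

context symop begin

lemma ip_scale2: "ip (\<lambda>x. a * f x) (\<lambda>x. b * g x) = a * b * ip f g"
  by (simp add: ip_def sum_distrib_left algebra_simps)

lemma ip_orth_sum:
  assumes fin: "finite R" and eig: "\<And>r x. r \<in> R \<Longrightarrow> x \<in> S \<Longrightarrow> Aop (e r) x = r * e r x"
  shows "ip (\<lambda>x. \<Sum>r\<in>R. c r * e r x) (\<lambda>x. \<Sum>r\<in>R. c r * e r x) = (\<Sum>r\<in>R. (c r)^2 * ip (e r) (e r))"
proof -
  let ?g = "\<lambda>x. \<Sum>r\<in>R. c r * e r x"
  have "ip ?g ?g = (\<Sum>r\<in>R. ip (\<lambda>x. c r * e r x) ?g)" by (rule ip_sum_left)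
  also have "\<dots> = (\<Sum>r\<in>R. (c r)^2 * ip (e r) (e r))"
  proof (rule sum.cong[OF refl])
    fix r assume r: "r \<in> R"
    have "ip (\<lambda>x. c r * e r x) ?g = ip ?g (\<lambda>x. c r * e r x)" by (rule ip_sym)
    also have "\<dots> = (\<Sum>s\<in>R. ip (\<lambda>x. c s * e s x) (\<lambda>x. c r * e r x))" by (rule ip_sum_left)
    also have "\<dots> = (\<Sum>s\<in>R. c s * c r * ip (e s) (e r))" by (simp only: ip_scale2)
    also have "\<dots> = c r * c r * ip (e r) (e r) + (\<Sum>s\<in>R-{r}. c s * c r * ip (e s) (e r))"
      using fin r by (simp add: sum.remove)
    also have "(\<Sum>s\<in>R-{r}. c s * c r * ip (e s) (e r)) = 0"
    proof (rule sum.neutral, intro ballI)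
      fix s assume s: "s \<in> R - {r}"
      have "ip (e s) (e r) = 0" by (rule eig_orth) (use s r eig in auto)
      then show "c s * c r * ip (e s) (e r) = 0" by simp
    qed
    finally show "ip (\<lambda>x. c r * e r x) ?g = (c r)^2 * ip (e r) (e r)" by (simp add: power2_eq_square)
  qed
  finally show ?thesis .
qed

end

lemma exp_sums_real: "(\<lambda>n. x ^ n / fact n) sums exp (x::real)"
  using exp_converges[of x] by (simp add: divide_inverse mult.commute)

context mchain begin

lemma heat_sums:
  assumes x: "x \<in> S" and y: "y \<in> S"
  shows "(\<lambda>k. exp (- t) * t ^ k / fact k * kpow K S k x y) sums heat_kernel S K t x y"
proof -
  have "summable (\<lambda>k. exp (- t) * t ^ k / fact k * kpow K S k x y)"
  proof (rule summable_comparison_test')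
    show "summable (\<lambda>k. exp (- t) * (\<bar>t\<bar> ^ k / fact k))"
      using exp_sums_real[of "\<bar>t\<bar>"] by (intro summable_mult sums_summable) auto
  next
    fix k :: nat
    have "norm (exp (- t) * t ^ k / fact k * kpow K S k x y) = exp (- t) * (\<bar>t\<bar> ^ k / fact k) * kpow K S k x y"
      using kpow_nonneg[OF x y, of k] by (simp add: abs_mult power_abs)
    also have "\<dots> \<le> exp (- t) * (\<bar>t\<bar> ^ k / fact k) * 1"
      by (intro mult_left_mono kpow_le1 x y) auto
    finally show "norm (exp (- t) * t ^ k / fact k * kpow K S k x y) \<le> exp (- t) * (\<bar>t\<bar> ^ k / fact k)" by simp
  qed
  then show ?thesis unfolding heat_kernel_def by (rule summable_sums)
qed

lemma cont_series1:
  assumes y: "y \<in> S"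
  shows "(\<lambda>k. exp (- t) * t ^ k / fact k * dist_disc S K \<mu> k y) sums dist_cont S K \<mu> t y"
proof -
  have "(\<lambda>k. \<Sum>x\<in>S. \<mu> x * (exp (- t) * t ^ k / fact k * kpow K S k x y)) sums (\<Sum>x\<in>S. \<mu> x * heat_kernel S K t x y)"
    by (rule sums_sum, rule sums_mult, rule heat_sums) (use y in auto)
  moreover have "(\<lambda>k. \<Sum>x\<in>S. \<mu> x * (exp (- t) * t ^ k / fact k * kpow K S k x y)) = (\<lambda>k. exp (- t) * t ^ k / fact k * dist_disc S K \<mu> k y)"
    by (rule ext) (simp add: dist_disc_def sum_distrib_left algebra_simps)
  ultimately show ?thesis unfolding dist_cont_def by simp
qed

end

definition GS :: "'i set \<Rightarrow> ('i \<Rightarrow> real) \<Rightarrow> ('i \<Rightarrow> real) \<Rightarrow> real \<Rightarrow> real" where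
  "GS I w \<rho> u = (\<Sum>i\<in>I. w i * exp (- (\<rho> i * u)))"

definition RC :: "(nat \<Rightarrow> real \<Rightarrow> real) \<Rightarrow> (nat \<Rightarrow> real) \<Rightarrow> bool" where
  "RC G t \<longleftrightarrow> (\<forall>n. t n > 0) \<and> (\<forall>a. 0 < a \<and> a < 1 \<longrightarrow>
      ((\<lambda>n. G n ((1+a) * t n)) \<longlonglongrightarrow> 0) \<and> filterlim (\<lambda>n. G n ((1-a) * t n)) at_top sequentially)"

lemma GS_nonneg: "(\<And>i. i \<in> I \<Longrightarrow> 0 \<le> w i) \<Longrightarrow> 0 \<le> GS I w \<rho> u"
  unfolding GS_def by (intro sum_nonneg mult_nonneg_nonneg) auto

lemma GS_cmp:
  assumes "\<And>i. i \<in> I \<Longrightarrow> 0 \<le> w i" "\<And>i. i \<in> I \<Longrightarrow> \<sigma> i * v \<le> \<rho> i * u"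
  shows "GS I w \<rho> u \<le> GS I w \<sigma> v"
  unfolding GS_def by (intro sum_mono mult_left_mono) (use assms in auto)

lemma GS_anti:
  assumes "\<And>i. i \<in> I \<Longrightarrow> 0 \<le> w i" "\<And>i. i \<in> I \<Longrightarrow> 0 \<le> \<rho> i" "u \<le> v"
  shows "GS I w \<rho> v \<le> GS I w \<rho> u"
  by (rule GS_cmp) (use assms in \<open>auto intro: mult_left_mono\<close>)

lemma GS_lower:
  assumes "\<And>i. i \<in> I \<Longrightarrow> 0 \<le> w i" "\<And>i. i \<in> I \<Longrightarrow> \<rho> i \<le> L" "0 \<le> u"
  shows "exp (- (L * u)) * (\<Sum>i\<in>I. w i) \<le> GS I w \<rho> u"
  unfolding GS_def sum_distrib_left
proof (intro sum_mono)
  fix i assume i: "i \<in> I"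
  have "\<rho> i * u \<le> L * u" using assms i by (intro mult_right_mono) auto
  then have "exp (- (L * u)) \<le> exp (- (\<rho> i * u))" by simp
  then show "exp (- (L * u)) * w i \<le> w i * exp (- (\<rho> i * u))"
    using assms(1)[OF i] by (simp add: mult.commute mult_left_mono)
qed

lemma inf_props:
  fixes h :: "real \<Rightarrow> real"
  assumes anti: "\<And>u v. 0 \<le> u \<Longrightarrow> u \<le> v \<Longrightarrow> h v \<le> h u"
    and u0: "0 \<le> u0" "h u0 \<le> 1"
  defines "T \<equiv> Inf {u. 0 \<le> u \<and> h u \<le> 1}"
  shows "0 \<le> T" "\<And>v. T < v \<Longrightarrow> h v \<le> 1" "\<And>v. 0 \<le> v \<Longrightarrow> v < T \<Longrightarrow> 1 < h v"
    "\<And>L. (\<And>u. 0 \<le> u \<Longrightarrow> u \<le> L \<Longrightarrow> 1 < h u) \<Longrightarrow> L \<le> T"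
proof -
  let ?X = "{u. 0 \<le> u \<and> h u \<le> 1}"
  have ne: "?X \<noteq> {}" using u0 by auto
  have bdd: "bdd_below ?X" by (rule bdd_belowI[of _ 0]) auto
  show "0 \<le> T" unfolding T_def by (rule cInf_greatest[OF ne]) auto
  show "h v \<le> 1" if "T < v" for v
  proof -
    obtain u where "u \<in> ?X" "u < v" using \<open>T < v\<close> cInf_less_iff[OF ne bdd] unfolding T_def by auto
    then show ?thesis using anti[of u v] by auto
  qed
  show "1 < h v" if "0 \<le> v" "v < T" for v
  proof (rule ccontr)
    assume "\<not> 1 < h v"
    then have "v \<in> ?X" using that by auto
    then have "T \<le> v" unfolding T_def by (rule cInf_lower[OF _ bdd])
    then show False using that by simp
  qed
  show "L \<le> T" if H: "\<And>u. 0 \<le> u \<Longrightarrow> u \<le> L \<Longrightarrow> 1 < h u" for L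
    unfolding T_def
  proof (rule cInf_greatest[OF ne])
    fix u assume "u \<in> ?X"
    then show "L \<le> u" using H[of u] by force
  qed
qed

lemma exp_choose_small: fixes a e :: real assumes "0 < a" "0 < e"
  shows "\<exists>M>0. exp (- (M * a / 2)) \<le> e"
proof -
  define M where "M = max 1 (2 / a * ln (1 / e))"
  have "M > 0" unfolding M_def by simp
  have "ln (1/e) \<le> M * a / 2" unfolding M_def using assms
    by (auto simp: field_simps max_def)
  then have "exp (- (M * a / 2)) \<le> exp (- ln (1/e))" by simp
  also have "\<dots> = e" using assms by (simp add: ln_div)
  finally show ?thesis using \<open>M > 0\<close> by blast
qed

lemma exp_choose_big: fixes a Z :: real assumes "0 < a"
  shows "\<exists>M>0. Z \<le> exp (M * a / 2) / 2"
proof -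
  define M where "M = max 1 (2 / a * ln (2 * \<bar>Z\<bar> + 1))"
  have "M > 0" unfolding M_def by simp
  have "ln (2 * \<bar>Z\<bar> + 1) \<le> M * a / 2" unfolding M_def using assms
    by (auto simp: field_simps max_def)
  then have "exp (ln (2 * \<bar>Z\<bar> + 1)) \<le> exp (M * a / 2)" by (rule exp_mono)
  then have "2 * \<bar>Z\<bar> + 1 \<le> exp (M * a / 2)" by (subst (asm) exp_ln) auto
  then show ?thesis using \<open>M > 0\<close> by (intro exI[of _ M]) auto
qed

lemma transfer:
  fixes I :: "nat \<Rightarrow> 'i set" and w \<rho> \<sigma> :: "nat \<Rightarrow> 'i \<Rightarrow> real" and t :: "nat \<Rightarrow> real"
  assumes fin: "\<And>n. finite (I n)" and wpos: "\<And>n i. i \<in> I n \<Longrightarrow> 0 \<le> w n i"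
    and sig0: "\<And>n i. i \<in> I n \<Longrightarrow> 0 \<le> \<sigma> n i"
    and p: "p > 0" and q: "q > 0"
    and lo: "\<And>n i. i \<in> I n \<Longrightarrow> p * \<sigma> n i \<le> \<rho> n i"
    and hi: "\<And>n i. i \<in> I n \<Longrightarrow> \<rho> n i \<le> q * \<sigma> n i"
    and Lam: "\<And>n i. i \<in> I n \<Longrightarrow> \<rho> n i \<le> L"
    and tot: "filterlim (\<lambda>n. \<Sum>i\<in>I n. w n i) at_top sequentially"
    and rc: "RC (\<lambda>n. GS (I n) (w n) (\<rho> n)) t"
  shows "\<exists>t'. RC (\<lambda>n. GS (I n) (w n) (\<sigma> n)) t'"
proof -
  define G where "G n u = GS (I n) (w n) (\<rho> n) u" for n u
  define H where "H n u = GS (I n) (w n) (\<sigma> n) u" for n u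
  have rho0: "0 \<le> \<rho> n i" if "i \<in> I n" for n i
    using lo[OF that] sig0[OF that] p by (smt (verit) mult_nonneg_nonneg)
  have tpos: "\<And>n. t n > 0" using rc unfolding RC_def by auto
  have rc2: "\<And>a. 0 < a \<Longrightarrow> a < 1 \<Longrightarrow> ((\<lambda>n. G n ((1+a) * t n)) \<longlonglongrightarrow> 0) \<and> filterlim (\<lambda>n. G n ((1-a)*t n)) at_top sequentially"
    using rc unfolding RC_def G_def by blast
  have G0: "(\<lambda>n. G n ((1 + 1/2) * t n)) \<longlonglongrightarrow> 0"
    using rc2[of "1/2"] by auto
  have Ginf: "filterlim (\<lambda>n. G n ((1 - 1/2) * t n)) at_top sequentially"
    using rc2[of "1/2"] by auto
  have Hanti: "H n v \<le> H n u" if "u \<le> v" for n u v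
    unfolding H_def by (rule GS_anti) (use wpos sig0 that in auto)
  have Hnn: "0 \<le> H n u" for n u unfolding H_def by (rule GS_nonneg) (use wpos in auto)
  define SG where "SG n M = (\<Sum>i\<in>{i\<in>I n. \<rho> n i * t n < M}. w n i)" for n M
  have SG0: "(\<lambda>n. SG n M) \<longlonglongrightarrow> 0" for M
  proof (rule tendsto_sandwich[of "\<lambda>n. 0" _ _ "\<lambda>n. exp (3/2 * M) * G n ((1 + 1/2) * t n)"])
    show "\<forall>\<^sub>F n in sequentially. 0 \<le> SG n M" unfolding SG_def
      by (intro always_eventually allI sum_nonneg) (use wpos in auto)
    show "\<forall>\<^sub>F n in sequentially. SG n M \<le> exp (3/2 * M) * G n ((1 + 1/2) * t n)"
    proof (intro always_eventually allI)
      fix n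
      have "SG n M \<le> (\<Sum>i\<in>{i\<in>I n. \<rho> n i * t n < M}. exp (3/2 * M) * (w n i * exp (- (\<rho> n i * ((1 + 1/2) * t n)))))"
        unfolding SG_def
      proof (rule sum_mono)
        fix i assume i: "i \<in> {i\<in>I n. \<rho> n i * t n < M}"
        have "\<rho> n i * ((1 + 1/2) * t n) \<le> 3/2 * M" using i by (auto simp: mult.commute)
        then have "1 \<le> exp (3/2 * M) * exp (- (\<rho> n i * ((1 + 1/2) * t n)))"
          by (simp add: exp_add[symmetric])
        then show "w n i \<le> exp (3/2 * M) * (w n i * exp (- (\<rho> n i * ((1 + 1/2) * t n))))"
        proof -
          have "w n i * 1 \<le> w n i * (exp (3/2 * M) * exp (- (\<rho> n i * ((1 + 1/2) * t n))))"
            using wpos[of i n] i \<open>1 \<le> _\<close> by (intro mult_left_mono) auto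
          then show ?thesis by (simp add: algebra_simps)
        qed
      qed
      also have "\<dots> \<le> (\<Sum>i\<in>I n. exp (3/2 * M) * (w n i * exp (- (\<rho> n i * ((1 + 1/2) * t n)))))"
        by (rule sum_mono2) (use fin wpos in auto)
      also have "\<dots> = exp (3/2 * M) * G n ((1 + 1/2) * t n)"
        unfolding G_def GS_def by (simp add: sum_distrib_left)
      finally show "SG n M \<le> exp (3/2 * M) * G n ((1 + 1/2) * t n)" .
    qed
  qed (use G0 tendsto_mult_right_zero in auto)
  define L' where "L' = max L 0"
  have tinf: "\<forall>\<^sub>F n in sequentially. B < t n" for B
  proof -
    have e1: "\<forall>\<^sub>F n in sequentially. G n ((1 + 1/2) * t n) < 1"
      using G0 by (rule order_tendstoD) simp
    have e2: "\<forall>\<^sub>F n in sequentially. exp (L' * ((1 + 1/2) * \<bar>B\<bar>)) \<le> (\<Sum>i\<in>I n. w n i)"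
      using tot by (simp add: filterlim_at_top)
    show ?thesis
    proof (rule eventually_mono[OF eventually_conj[OF e1 e2]])
      fix n assume n: "G n ((1 + 1/2) * t n) < 1 \<and> exp (L' * ((1 + 1/2) * \<bar>B\<bar>)) \<le> (\<Sum>i\<in>I n. w n i)"
      show "B < t n"
      proof (rule ccontr)
        assume "\<not> B < t n"
        then have tb: "t n \<le> \<bar>B\<bar>" by simp
        have "exp (- (L' * ((1 + 1/2) * t n))) * (\<Sum>i\<in>I n. w n i) \<le> G n ((1 + 1/2) * t n)"
          unfolding G_def
        proof (rule GS_lower)
          fix i assume "i \<in> I n" then show "0 \<le> w n i" by (rule wpos)
        next
          fix i assume i: "i \<in> I n" show "\<rho> n i \<le> L'" unfolding L'_def using Lam[OF i] by simp
        next
          show "0 \<le> (1 + 1/2) * t n" using tpos[of n] by simp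
        qed
        moreover have "exp (- (L' * ((1 + 1/2) * \<bar>B\<bar>))) \<le> exp (- (L' * ((1 + 1/2) * t n)))"
        proof -
          have "L' * t n \<le> L' * \<bar>B\<bar>" using tb L'_def by (intro mult_left_mono) auto
          then show ?thesis by simp
        qed
        moreover have "exp (- (L' * ((1 + 1/2) * \<bar>B\<bar>))) * exp (L' * ((1 + 1/2) * \<bar>B\<bar>)) = 1"
          by (simp add: exp_add[symmetric])
        ultimately have "1 \<le> G n ((1 + 1/2) * t n)" using n
          by (smt (verit, best) exp_gt_zero mult_left_mono mult_right_mono sum_nonneg wpos)
        then show False using n by simp
      qed
    qed
  qed
  define T where "T n = Inf {u. 0 \<le> u \<and> H n u \<le> 1}" for n
  define good where "good n \<longleftrightarrow> H n (3/2 * q * t n) \<le> 1 \<and> 1 < G n ((1 - 1/2) * t n)" for n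
  have evgood: "\<forall>\<^sub>F n in sequentially. good n"
  proof -
    have e1: "\<forall>\<^sub>F n in sequentially. G n ((1 + 1/2) * t n) < 1"
      using G0 by (rule order_tendstoD) simp
    have e2: "\<forall>\<^sub>F n in sequentially. 1 < G n ((1 - 1/2) * t n)"
      using Ginf by (simp add: filterlim_at_top_dense)
    show ?thesis
    proof (rule eventually_mono[OF eventually_conj[OF e1 e2]])
      fix n assume n: "G n ((1 + 1/2) * t n) < 1 \<and> 1 < G n ((1 - 1/2) * t n)"
      have "H n (3/2 * q * t n) \<le> G n ((1 + 1/2) * t n)"
        unfolding H_def G_def
      proof (rule GS_cmp)
        fix i assume i: "i \<in> I n"
        have "\<rho> n i * t n \<le> q * \<sigma> n i * t n" using hi[OF i] tpos[of n] by (simp add: mult_right_mono)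
        then show "\<rho> n i * ((1 + 1/2) * t n) \<le> \<sigma> n i * (3/2 * q * t n)" by (simp add: algebra_simps)
      qed (use wpos in auto)
      then show "good n" using n unfolding good_def by simp
    qed
  qed
  have Tprops: "0 < T n \<and> p * t n / 2 \<le> T n \<and> (\<forall>v. T n < v \<longrightarrow> H n v \<le> 1) \<and> (\<forall>v. 0 \<le> v \<and> v < T n \<longrightarrow> 1 < H n v)"
    if "good n" for n
  proof -
    have a1: "\<And>u v. 0 \<le> u \<Longrightarrow> u \<le> v \<Longrightarrow> H n v \<le> H n u" using Hanti by blast
    have a2: "0 \<le> 3/2 * q * t n" using q tpos[of n] by simp
    have a3: "H n (3/2 * q * t n) \<le> 1" using that unfolding good_def by simp
    note ip = inf_props[of "H n", OF a1 a2 a3, folded T_def]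
    have "p * t n / 2 \<le> T n"
    proof (rule ip(4))
      fix u assume u: "0 \<le> u" "u \<le> p * t n / 2"
      have "G n ((1 - 1/2) * t n) \<le> H n (p * t n / 2)"
        unfolding H_def G_def
      proof (rule GS_cmp)
        fix i assume i: "i \<in> I n"
        have "p * \<sigma> n i * t n \<le> \<rho> n i * t n" using lo[OF i] tpos[of n] by (simp add: mult_right_mono)
        then show "\<sigma> n i * (p * t n / 2) \<le> \<rho> n i * ((1 - 1/2) * t n)" by (simp add: algebra_simps)
      qed (use wpos in auto)
      also have "H n (p * t n / 2) \<le> H n u" using Hanti u by blast
      finally show "1 < H n u" using that unfolding good_def by simp
    qed
    moreover have "0 < p * t n / 2" using p tpos[of n] by simp
    ultimately show ?thesis using ip(2,3) by auto
  qed
  define SH where "SH n M = (\<Sum>i\<in>{i\<in>I n. \<sigma> n i * T n < M}. w n i)" for n M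
  have SHnn: "0 \<le> SH n M" for n M unfolding SH_def by (rule sum_nonneg) (use wpos in auto)
  have SH0: "(\<lambda>n. SH n M) \<longlonglongrightarrow> 0" if M: "M > 0" for M
  proof (rule tendsto_sandwich[of "\<lambda>n. 0" _ _ "\<lambda>n. SG n (2 * q * M / p)"])
    show "\<forall>\<^sub>F n in sequentially. 0 \<le> SH n M" by (simp add: SHnn)
    show "\<forall>\<^sub>F n in sequentially. SH n M \<le> SG n (2 * q * M / p)"
    proof (rule eventually_mono[OF evgood])
      fix n assume g: "good n"
      then have T: "p * t n / 2 \<le> T n" using Tprops by blast
      have sub: "{i\<in>I n. \<sigma> n i * T n < M} \<subseteq> {i\<in>I n. \<rho> n i * t n < 2 * q * M / p}"
      proof
        fix i assume "i \<in> {i\<in>I n. \<sigma> n i * T n < M}"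
        then have i: "i \<in> I n" and sl: "\<sigma> n i * T n < M" by auto
        have "\<rho> n i * t n \<le> q * \<sigma> n i * t n" using hi[OF i] tpos[of n] by (simp add: mult_right_mono)
        also have "\<dots> \<le> q * \<sigma> n i * (2 * T n / p)"
          using T p q sig0[OF i] by (intro mult_left_mono) (auto simp: field_simps)
        also have "\<dots> = (2 * q / p) * (\<sigma> n i * T n)" by simp
        also have "\<dots> < (2 * q / p) * M" using sl p q by (intro mult_strict_left_mono) auto
        finally show "i \<in> {i\<in>I n. \<rho> n i * t n < 2 * q * M / p}" using i by simp
      qed
      show "SH n M \<le> SG n (2 * q * M / p)"
        unfolding SH_def SG_def by (rule sum_mono2) (use fin sub wpos in auto)
    qed
  qed (auto intro: SG0)
  have upper: "(\<lambda>n. H n ((1 + a) * T n)) \<longlonglongrightarrow> 0" if a: "0 < a" "a < 1" for a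
  proof (rule tendstoI)
    fix e :: real assume e: "0 < e"
    obtain M where M: "M > 0" "exp (- (M * a / 2)) \<le> e / 2" using exp_choose_small[OF a(1), of "e/2"] e by auto
    have e1: "\<forall>\<^sub>F n in sequentially. SH n M < e / 2"
      using SH0[OF M(1)] by (rule order_tendstoD) (use e in simp)
    show "\<forall>\<^sub>F n in sequentially. dist (H n ((1 + a) * T n)) 0 < e"
    proof (rule eventually_mono[OF eventually_conj[OF e1 evgood]])
      fix n assume n: "SH n M < e / 2 \<and> good n"
      then have Tp: "0 < T n" and Hv: "H n ((1 + a/2) * T n) \<le> 1" using Tprops[of n] a by auto
      have "H n ((1 + a) * T n) \<le> (\<Sum>i\<in>I n. (if \<sigma> n i * T n < M then w n i else 0)
              + exp (- (M * a / 2)) * (w n i * exp (- (\<sigma> n i * ((1 + a/2) * T n)))))"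
        unfolding H_def GS_def
      proof (rule sum_mono)
        fix i assume i: "i \<in> I n"
        show "w n i * exp (- (\<sigma> n i * ((1 + a) * T n))) \<le> (if \<sigma> n i * T n < M then w n i else 0)
              + exp (- (M * a / 2)) * (w n i * exp (- (\<sigma> n i * ((1 + a/2) * T n))))"
        proof (cases "\<sigma> n i * T n < M")
          case True
          have "exp (- (\<sigma> n i * ((1 + a) * T n))) \<le> 1" using sig0[OF i] Tp a by simp
          then have "w n i * exp (- (\<sigma> n i * ((1 + a) * T n))) \<le> w n i"
            using wpos[OF i] by (simp add: mult_left_le)
          moreover have "0 \<le> exp (- (M * a / 2)) * (w n i * exp (- (\<sigma> n i * ((1 + a/2) * T n))))"
            using wpos[OF i] by simp
          ultimately show ?thesis using True by simp
        next
          case False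
          have "exp (- (\<sigma> n i * ((1 + a) * T n))) = exp (- (\<sigma> n i * T n * (a/2))) * exp (- (\<sigma> n i * ((1 + a/2) * T n)))"
            by (simp add: exp_add[symmetric] algebra_simps)
          also have "\<dots> \<le> exp (- (M * a / 2)) * exp (- (\<sigma> n i * ((1 + a/2) * T n)))"
            using False a by (intro mult_right_mono) (auto simp: mult_right_mono)
          finally have "w n i * exp (- (\<sigma> n i * ((1 + a) * T n))) \<le> w n i * (exp (- (M * a / 2)) * exp (- (\<sigma> n i * ((1 + a/2) * T n))))"
            using wpos[OF i] by (simp add: mult_left_mono)
          then show ?thesis using False by (simp add: algebra_simps)
        qed
      qed
      also have "\<dots> = SH n M + exp (- (M * a / 2)) * H n ((1 + a/2) * T n)"
        unfolding SH_def H_def GS_def by (simp add: sum.distrib sum_distrib_left sum.inter_filter[OF fin])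
      also have "\<dots> \<le> SH n M + exp (- (M * a / 2))"
        using Hv by (simp add: mult_left_le)
      also have "\<dots> < e" using n M by simp
      finally show "dist (H n ((1 + a) * T n)) 0 < e" using Hnn[of n] by simp
    qed
  qed
  have lower: "filterlim (\<lambda>n. H n ((1 - a) * T n)) at_top sequentially" if a: "0 < a" "a < 1" for a
    unfolding filterlim_at_top
  proof (intro allI)
    fix Z :: real
    obtain M where M: "M > 0" "Z \<le> exp (M * a / 2) / 2" using exp_choose_big[OF a(1)] by blast
    have e1: "\<forall>\<^sub>F n in sequentially. SH n M < 1 / 2"
      using SH0[OF M(1)] by (rule order_tendstoD) simp
    show "\<forall>\<^sub>F n in sequentially. Z \<le> H n ((1 - a) * T n)"
    proof (rule eventually_mono[OF eventually_conj[OF e1 evgood]])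
      fix n assume n: "SH n M < 1 / 2 \<and> good n"
      then have Tp: "0 < T n" and Hv: "1 < H n ((1 - a/2) * T n)" using Tprops[of n] a by auto
      have "exp (M * a / 2) * (H n ((1 - a/2) * T n) - SH n M)
           = (\<Sum>i\<in>I n. exp (M * a / 2) * (w n i * exp (- (\<sigma> n i * ((1 - a/2) * T n))) - (if \<sigma> n i * T n < M then w n i else 0)))"
        unfolding SH_def H_def GS_def by (simp add: sum_subtractf sum_distrib_left sum.inter_filter[OF fin] right_diff_distrib)
      also have "\<dots> \<le> H n ((1 - a) * T n)"
        unfolding H_def GS_def
      proof (rule sum_mono)
        fix i assume i: "i \<in> I n"
        show "exp (M * a / 2) * (w n i * exp (- (\<sigma> n i * ((1 - a/2) * T n))) - (if \<sigma> n i * T n < M then w n i else 0))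
              \<le> w n i * exp (- (\<sigma> n i * ((1 - a) * T n)))"
        proof (cases "\<sigma> n i * T n < M")
          case True
          have "exp (- (\<sigma> n i * ((1 - a/2) * T n))) \<le> 1" using sig0[OF i] Tp a by simp
          then have "w n i * exp (- (\<sigma> n i * ((1 - a/2) * T n))) - w n i \<le> 0"
            using wpos[OF i] by (simp add: mult_left_le)
          then have "exp (M * a / 2) * (w n i * exp (- (\<sigma> n i * ((1 - a/2) * T n))) - w n i) \<le> 0"
            by (simp add: mult_nonneg_nonpos)
          moreover have "0 \<le> w n i * exp (- (\<sigma> n i * ((1 - a) * T n)))" using wpos[OF i] by simp
          ultimately show ?thesis using True by simp
        next
          case False
          have "exp (M * a / 2) * exp (- (\<sigma> n i * ((1 - a/2) * T n))) \<le> exp (\<sigma> n i * T n * (a/2)) * exp (- (\<sigma> n i * ((1 - a/2) * T n)))"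
            using False a by (intro mult_right_mono) (auto simp: mult_right_mono)
          also have "\<dots> = exp (- (\<sigma> n i * ((1 - a) * T n)))"
            by (simp add: exp_add[symmetric] algebra_simps)
          finally show ?thesis using False wpos[OF i]
            by (simp add: mult.left_commute mult_left_mono)
        qed
      qed
      finally have "exp (M * a / 2) * (H n ((1 - a/2) * T n) - SH n M) \<le> H n ((1 - a) * T n)" .
      moreover have "exp (M * a / 2) / 2 \<le> exp (M * a / 2) * (H n ((1 - a/2) * T n) - SH n M)"
        using n Hv by (simp add: mult_left_mono)
      ultimately show "Z \<le> H n ((1 - a) * T n)" using M by linarith
    qed
  qed
  define t' where "t' n = (if 0 < T n then T n else 1)" for n
  have evT: "\<forall>\<^sub>F n in sequentially. t' n = T n"
    by (rule eventually_mono[OF evgood]) (use Tprops in \<open>auto simp: t'_def\<close>)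
  have "RC H t'"
    unfolding RC_def
  proof (intro conjI allI impI)
    show "0 < t' n" for n by (simp add: t'_def)
  next
    fix a :: real assume a: "0 < a \<and> a < 1"
    have ev: "\<forall>\<^sub>F n in sequentially. H n ((1 + a) * t' n) = H n ((1 + a) * T n)"
      by (rule eventually_mono[OF evT]) simp
    show "(\<lambda>n. H n ((1 + a) * t' n)) \<longlonglongrightarrow> 0"
      using upper[of a] a tendsto_cong[OF ev] by simp
  next
    fix a :: real assume a: "0 < a \<and> a < 1"
    have ev: "\<forall>\<^sub>F n in sequentially. H n ((1 - a) * t' n) = H n ((1 - a) * T n)"
      by (rule eventually_mono[OF evT]) simp
    show "filterlim (\<lambda>n. H n ((1 - a) * t' n)) at_top sequentially"
      using lower[of a] a filterlim_cong[OF refl refl ev] by simp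
  qed
  then show ?thesis unfolding H_def by blast
qed

lemma exp_ln_pow: "0 < r \<Longrightarrow> exp (- (-2 * ln r * real m)) = (r ^ m)^2"
proof -
  assume r: "0 < r"
  have "exp (- (-2 * ln r * real m)) = exp (real (2 * m) * ln r)" by (simp add: algebra_simps)
  also have "\<dots> = r powr real (2 * m)" using r by (simp add: powr_def)
  also have "\<dots> = r ^ (2 * m)" by (rule powr_realpow[OF r])
  also have "\<dots> = (r ^ m)^2" by (simp add: power_mult[symmetric] mult.commute)
  finally show ?thesis .
qed

lemma exp_sq2: "(exp (- t) * exp (t * r))^2 = exp (- (2 * (1 - r) * (t::real)))"
proof -
  have e: "exp (- t) * exp (t * r) = exp (- t + t * r)" by (rule exp_add[symmetric])
  have "(exp (- t) * exp (t * r))^2 = exp (- t + t * r) * exp (- t + t * r)"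
    by (simp only: e power2_eq_square)
  also have "\<dots> = exp (- (2 * (1 - r) * t))" by (simp add: exp_add[symmetric] algebra_simps)
  finally show ?thesis .
qed

context mchain begin

lemma l2_ip: "l2dist S \<pi> \<nu> = sqrt (ip (\<lambda>y. \<nu> y / \<pi> y - 1) (\<lambda>y. \<nu> y / \<pi> y - 1))"
  unfolding l2dist_def ip_def by (simp add: power2_eq_square)

lemma d2_disc0: "d2_disc S K \<pi> \<mu> 0 = sqrt ((\<Sum>y\<in>S. (\<mu> y)^2 / \<pi> y) - 1)"
proof -
  have dd: "dist_disc S K \<mu> 0 y = \<mu> y" if "y \<in> S" for y
    unfolding dist_disc_def using sum_ind2[OF that, of \<mu>] by simp
  have "(\<Sum>y\<in>S. \<bar>dist_disc S K \<mu> 0 y / \<pi> y - 1\<bar>^2 * \<pi> y) = (\<Sum>y\<in>S. (\<mu> y)^2 / \<pi> y - 2 * \<mu> y + \<pi> y)"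
  proof (rule sum.cong[OF refl])
    fix y assume y: "y \<in> S"
    have "\<pi> y \<noteq> 0" using pipos[OF y] by simp
    then show "\<bar>dist_disc S K \<mu> 0 y / \<pi> y - 1\<bar>^2 * \<pi> y = (\<mu> y)^2 / \<pi> y - 2 * \<mu> y + \<pi> y"
      using dd[OF y] by (simp add: power2_eq_square field_simps)
  qed
  also have "\<dots> = (\<Sum>y\<in>S. (\<mu> y)^2 / \<pi> y) - 1"
    by (simp add: sum.distrib sum_subtractf sum_distrib_left[symmetric] musum pisum)
  finally show ?thesis unfolding d2_disc_def l2dist_def by simp
qed

lemma chain_rep:
  "\<exists>R w. finite R \<and> (\<forall>r\<in>R. 2 * c - 1 \<le> r \<and> r \<le> 1 \<and> 0 \<le> w r)
     \<and> (\<forall>m. d2_disc S K \<pi> \<mu> m = sqrt (GS R w (\<lambda>r. -2 * ln r) (real m)))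
     \<and> (\<forall>t. d2_cont S K \<pi> \<mu> t = sqrt (GS R w (\<lambda>r. 2 * (1 - r)) t))"
proof -
  obtain R0 e where dec0: "eigdec f0 R0 e" using spectral by blast
  have fin0: "finite R0" and eig: "\<And>r x. r \<in> R0 \<Longrightarrow> x \<in> S \<Longrightarrow> Aop (e r) x = r * e r x"
    and sm0: "\<And>x. x \<in> S \<Longrightarrow> f0 x = (\<Sum>r\<in>R0. e r x)" using dec0 unfolding eigdec_def by auto
  define R where "R = {r\<in>R0. 0 < ip (e r) (e r)}"
  define w where "w r = ip (e r) (e r)" for r
  have RR0: "R \<subseteq> R0" unfolding R_def by auto
  have fin: "finite R" using fin0 RR0 finite_subset by blast
  have zero: "e r x = 0" if "r \<in> R0 - R" "x \<in> S" for r x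
  proof -
    have "ip (e r) (e r) = 0" using that ip_nonneg[of "e r"] unfolding R_def by auto
    then show ?thesis using ip_zero that(2) by blast
  qed
  have sm: "f0 x = (\<Sum>r\<in>R. e r x)" if x: "x \<in> S" for x
    using sm0[OF x] sum.mono_neutral_right[OF fin0 RR0, of "\<lambda>r. e r x"] zero x by auto
  have rng: "2 * c - 1 \<le> r \<and> r \<le> 1" if "r \<in> R" for r
    by (rule eig_range) (use that eig RR0 in \<open>auto simp: R_def\<close>)
  have rpos: "0 < r" if "r \<in> R" for r using rng[OF that] c by simp
  have Ap: "(Aop ^^ m) f0 y = (\<Sum>r\<in>R. r ^ m * e r y)" if y: "y \<in> S" for m y
  proof -
    have "(Aop ^^ m) f0 y = (\<Sum>x\<in>S. kpow K S m y x * (\<Sum>r\<in>R. e r x))"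
      unfolding Apow_kpow[OF y] by (rule sum.cong) (auto simp: sm)
    also have "\<dots> = (\<Sum>x\<in>S. \<Sum>r\<in>R. kpow K S m y x * e r x)" by (simp only: sum_distrib_left)
    also have "\<dots> = (\<Sum>r\<in>R. \<Sum>x\<in>S. kpow K S m y x * e r x)" by (rule sum.swap)
    also have "\<dots> = (\<Sum>r\<in>R. (Aop ^^ m) (e r) y)" by (simp only: Apow_kpow[OF y])
    also have "\<dots> = (\<Sum>r\<in>R. r ^ m * e r y)"
      by (rule sum.cong[OF refl], rule Apow_eigen) (use eig RR0 y in auto)
    finally show ?thesis .
  qed
  have eigR: "\<And>r x. r \<in> R \<Longrightarrow> x \<in> S \<Longrightarrow> Aop (e r) x = r * e r x" using eig RR0 by auto
  have disc: "d2_disc S K \<pi> \<mu> m = sqrt (GS R w (\<lambda>r. -2 * ln r) (real m))" for m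
  proof -
    have "d2_disc S K \<pi> \<mu> m = sqrt (ip (\<lambda>y. \<Sum>r\<in>R. r ^ m * e r y) (\<lambda>y. \<Sum>r\<in>R. r ^ m * e r y))"
      unfolding d2_disc_def l2_ip
      by (rule arg_cong[of _ _ sqrt], rule ip_cong) (auto simp: dist_disc_f0 Ap)
    also have "\<dots> = sqrt (\<Sum>r\<in>R. (r ^ m)^2 * w r)" by (simp only: ip_orth_sum[OF fin eigR] w_def)
    also have "\<dots> = sqrt (GS R w (\<lambda>r. -2 * ln r) (real m))"
      unfolding GS_def
    proof (rule arg_cong[of _ _ sqrt], rule sum.cong[OF refl])
      fix r assume r: "r \<in> R"
      show "(r ^ m)\<^sup>2 * w r = w r * exp (- (-2 * ln r * real m))"
        using exp_ln_pow[OF rpos[OF r], of m] by (simp add: mult.commute)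
    qed
    finally show ?thesis .
  qed
  have dcont: "dist_cont S K \<mu> t y = \<pi> y * (1 + (\<Sum>r\<in>R. (exp (- t) * exp (t * r)) * e r y))" if y: "y \<in> S" for t y
  proof -
    have dd: "dist_disc S K \<mu> k y = \<pi> y * (1 + (\<Sum>r\<in>R. r ^ k * e r y))" for k
    proof -
      have "dist_disc S K \<mu> k y / \<pi> y = 1 + (\<Sum>r\<in>R. r ^ k * e r y)"
        using dist_disc_f0[OF y, of k] Ap[OF y, of k] by simp
      then show ?thesis using pipos[OF y] by (simp add: field_simps)
    qed
    have s1: "(\<lambda>k. exp (- t) * (t ^ k / fact k)) sums (exp (- t) * exp t)"
      by (rule sums_mult, rule exp_sums_real)
    have s2: "(\<lambda>k. \<Sum>r\<in>R. (exp (- t) * e r y) * ((t * r) ^ k / fact k)) sums (\<Sum>r\<in>R. (exp (- t) * e r y) * exp (t * r))"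
      by (rule sums_sum, rule sums_mult, rule exp_sums_real)
    have "(\<lambda>k. \<pi> y * (exp (- t) * (t ^ k / fact k) + (\<Sum>r\<in>R. (exp (- t) * e r y) * ((t * r) ^ k / fact k))))
          sums (\<pi> y * (exp (- t) * exp t + (\<Sum>r\<in>R. (exp (- t) * e r y) * exp (t * r))))"
      by (rule sums_mult, rule sums_add[OF s1 s2])
    moreover have "(\<lambda>k. \<pi> y * (exp (- t) * (t ^ k / fact k) + (\<Sum>r\<in>R. (exp (- t) * e r y) * ((t * r) ^ k / fact k))))
          = (\<lambda>k. exp (- t) * t ^ k / fact k * dist_disc S K \<mu> k y)"
    proof (rule ext)
      fix k
      have "(\<Sum>r\<in>R. (exp (- t) * e r y) * ((t * r) ^ k / fact k)) = exp (- t) * t ^ k / fact k * (\<Sum>r\<in>R. r ^ k * e r y)"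
        by (simp add: sum_distrib_left sum_divide_distrib power_mult_distrib algebra_simps)
      then show "\<pi> y * (exp (- t) * (t ^ k / fact k) + (\<Sum>r\<in>R. (exp (- t) * e r y) * ((t * r) ^ k / fact k)))
          = exp (- t) * t ^ k / fact k * dist_disc S K \<mu> k y"
        by (simp add: dd algebra_simps)
    qed
    ultimately have "(\<lambda>k. exp (- t) * t ^ k / fact k * dist_disc S K \<mu> k y)
          sums (\<pi> y * (exp (- t) * exp t + (\<Sum>r\<in>R. (exp (- t) * e r y) * exp (t * r))))" by simp
    from sums_unique2[OF cont_series1[OF y] this]
    show ?thesis by (simp add: exp_minus_inverse algebra_simps)
  qed
  have cont: "d2_cont S K \<pi> \<mu> t = sqrt (GS R w (\<lambda>r. 2 * (1 - r)) t)" for t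
  proof -
    have "d2_cont S K \<pi> \<mu> t = sqrt (ip (\<lambda>y. \<Sum>r\<in>R. (exp (- t) * exp (t * r)) * e r y) (\<lambda>y. \<Sum>r\<in>R. (exp (- t) * exp (t * r)) * e r y))"
      unfolding d2_cont_def l2_ip
      by (rule arg_cong[of _ _ sqrt], rule ip_cong) (auto simp: dcont pipos less_imp_neq[OF pipos, symmetric])
    also have "\<dots> = sqrt (\<Sum>r\<in>R. (exp (- t) * exp (t * r))^2 * w r)" by (simp only: ip_orth_sum[OF fin eigR] w_def)
    also have "\<dots> = sqrt (GS R w (\<lambda>r. 2 * (1 - r)) t)"
      unfolding GS_def by (rule arg_cong[of _ _ sqrt], rule sum.cong[OF refl]) (simp add: exp_sq2)
    finally show ?thesis .
  qed
  have "\<forall>r\<in>R. 2 * c - 1 \<le> r \<and> r \<le> 1 \<and> 0 \<le> w r" using rng ip_nonneg unfolding w_def by auto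
  then show ?thesis using fin disc cont by blast
qed

end

lemma sqrt_tendsto0_iff:
  assumes "\<And>n. 0 \<le> X n"
  shows "((\<lambda>n. sqrt (X n)) \<longlonglongrightarrow> 0) \<longleftrightarrow> (X \<longlonglongrightarrow> 0)"
proof
  assume "(\<lambda>n. sqrt (X n)) \<longlonglongrightarrow> 0"
  then have "(\<lambda>n. (sqrt (X n))^2) \<longlonglongrightarrow> 0^2" by (rule tendsto_power)
  then show "X \<longlonglongrightarrow> 0" using assms by simp
next
  assume "X \<longlonglongrightarrow> 0"
  then have "(\<lambda>n. sqrt (X n)) \<longlonglongrightarrow> sqrt 0" by (rule tendsto_real_sqrt)
  then show "(\<lambda>n. sqrt (X n)) \<longlonglongrightarrow> 0" by simp
qed

lemma sqrt_attop_iff: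
  assumes "\<And>n. 0 \<le> X n"
  shows "filterlim (\<lambda>n. sqrt (X n)) at_top sequentially \<longleftrightarrow> filterlim X at_top sequentially"
proof
  assume "filterlim (\<lambda>n. sqrt (X n)) at_top sequentially"
  then have "filterlim (\<lambda>n. (sqrt (X n))^2) at_top sequentially" by (intro filterlim_pow_at_top) simp_all
  then show "filterlim X at_top sequentially" using assms by simp
next
  assume "filterlim X at_top sequentially"
  then show "filterlim (\<lambda>n. sqrt (X n)) at_top sequentially" by (rule filterlim_compose[OF sqrt_at_top])
qed

lemma rates:
  fixes d r :: real assumes d: "0 < d" "d \<le> r" "r \<le> 1"
  shows "2 * (1 - r) \<le> -2 * ln r" "d * (-2 * ln r) \<le> 2 * (1 - r)" "-2 * ln r \<le> -2 * ln d"
    "0 \<le> 2 * (1 - r)" "0 \<le> -2 * ln r" "2 * (1 - r) \<le> 2"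
proof -
  have r: "0 < r" using d by simp
  show "2 * (1 - r) \<le> -2 * ln r" using ln_le_minus_one[OF r] by simp
  have l0: "0 \<le> - ln r" using d r by simp
  have "ln (1/r) \<le> 1/r - 1" using ln_le_minus_one[of "1/r"] r by simp
  then have "- ln r \<le> 1/r - 1" using r by (simp add: ln_div)
  then have "r * (- ln r) \<le> r * (1/r - 1)" using r by (intro mult_left_mono) auto
  also have "\<dots> = 1 - r" using r by (simp add: field_simps)
  finally have "r * (- ln r) \<le> 1 - r" .
  moreover have "d * (- ln r) \<le> r * (- ln r)" using d l0 by (intro mult_right_mono) auto
  ultimately show "d * (-2 * ln r) \<le> 2 * (1 - r)" by simp
  show "-2 * ln r \<le> -2 * ln d" using d by simp
  show "0 \<le> 2 * (1 - r)" using d by simp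
  show "0 \<le> -2 * ln r" using l0 by simp
  show "2 * (1 - r) \<le> 2" using d by simp
qed

lemma GS_lower_nat:
  assumes "\<And>i. i \<in> I \<Longrightarrow> 0 \<le> w i" "\<And>i. i \<in> I \<Longrightarrow> \<rho> i \<le> L" "0 \<le> L" "0 \<le> u" "u \<le> B"
  shows "exp (- (L * B)) * (\<Sum>i\<in>I. w i) \<le> GS I w \<rho> u"
proof -
  have "exp (- (L * B)) \<le> exp (- (L * u))" using assms(3-5) by (simp add: mult_left_mono)
  then have "exp (- (L * B)) * (\<Sum>i\<in>I. w i) \<le> exp (- (L * u)) * (\<Sum>i\<in>I. w i)"
    by (rule mult_right_mono) (simp add: assms(1) sum_nonneg)
  also have "\<dots> \<le> GS I w \<rho> u" by (rule GS_lower) (use assms in auto)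
  finally show ?thesis .
qed

lemma disc_to_RC:
  fixes I :: "nat \<Rightarrow> 'i set" and w \<rho> :: "nat \<Rightarrow> 'i \<Rightarrow> real"
  assumes wpos: "\<And>n i. i \<in> I n \<Longrightarrow> 0 \<le> w n i" and r0: "\<And>n i. i \<in> I n \<Longrightarrow> 0 \<le> \<rho> n i"
    and Lam: "\<And>n i. i \<in> I n \<Longrightarrow> \<rho> n i \<le> L"
    and tot: "filterlim (\<lambda>n. \<Sum>i\<in>I n. w n i) at_top sequentially"
    and tpos: "\<And>n. t n > 0"
    and up: "\<And>a. 0 < a \<Longrightarrow> a < 1 \<Longrightarrow> (\<lambda>n. GS (I n) (w n) (\<rho> n) (real (nat \<lceil>(1 + a) * t n\<rceil>))) \<longlonglongrightarrow> 0"
    and lo: "\<And>a. 0 < a \<Longrightarrow> a < 1 \<Longrightarrow> filterlim (\<lambda>n. GS (I n) (w n) (\<rho> n) (real (nat \<lfloor>(1 - a) * t n\<rfloor>))) at_top sequentially"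
  shows "RC (\<lambda>n. GS (I n) (w n) (\<rho> n)) t"
proof -
  define G where "G n u = GS (I n) (w n) (\<rho> n) u" for n u
  define L' where "L' = max L 0"
  have Ganti: "G n v \<le> G n u" if "u \<le> v" for n u v
    unfolding G_def by (rule GS_anti) (use wpos r0 that in auto)
  have Gnn: "0 \<le> G n u" for n u unfolding G_def by (rule GS_nonneg) (use wpos in auto)
  have tinf: "\<forall>\<^sub>F n in sequentially. B < t n" for B
  proof -
    have e1: "\<forall>\<^sub>F n in sequentially. G n (real (nat \<lceil>(1 + 1/2) * t n\<rceil>)) < 1"
      using up[of "1/2"] unfolding G_def by (rule order_tendstoD) auto
    have e2: "\<forall>\<^sub>F n in sequentially. exp (L' * (3/2 * \<bar>B\<bar> + 1)) \<le> (\<Sum>i\<in>I n. w n i)"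
      using tot by (simp add: filterlim_at_top)
    show ?thesis
    proof (rule eventually_mono[OF eventually_conj[OF e1 e2]])
      fix n assume n: "G n (real (nat \<lceil>(1 + 1/2) * t n\<rceil>)) < 1 \<and> exp (L' * (3/2 * \<bar>B\<bar> + 1)) \<le> (\<Sum>i\<in>I n. w n i)"
      show "B < t n"
      proof (rule ccontr)
        assume "\<not> B < t n"
        then have tb: "t n \<le> \<bar>B\<bar>" by simp
        have "real (nat \<lceil>(1 + 1/2) * t n\<rceil>) \<le> (1 + 1/2) * t n + 1"
          using tpos[of n] by (simp add: of_nat_nat)
        also have "\<dots> \<le> 3/2 * \<bar>B\<bar> + 1" using tb by simp
        finally have ub: "real (nat \<lceil>(1 + 1/2) * t n\<rceil>) \<le> 3/2 * \<bar>B\<bar> + 1" .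
        have "exp (- (L' * (3/2 * \<bar>B\<bar> + 1))) * (\<Sum>i\<in>I n. w n i) \<le> G n (real (nat \<lceil>(1 + 1/2) * t n\<rceil>))"
          unfolding G_def
        proof (rule GS_lower_nat[OF _ _ _ _ ub])
          fix i assume "i \<in> I n" then show "0 \<le> w n i" by (rule wpos)
        next
          fix i assume i: "i \<in> I n" show "\<rho> n i \<le> L'" unfolding L'_def using Lam[OF i] by simp
        qed (use tpos[of n] in \<open>auto simp: L'_def\<close>)
        moreover have "1 \<le> exp (- (L' * (3/2 * \<bar>B\<bar> + 1))) * (\<Sum>i\<in>I n. w n i)"
        proof -
          have "exp (- (L' * (3/2 * \<bar>B\<bar> + 1))) * exp (L' * (3/2 * \<bar>B\<bar> + 1)) = 1"
            by (simp add: exp_add[symmetric])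
          then show ?thesis using n by (metis exp_gt_zero mult_left_mono order_less_imp_le)
        qed
        ultimately show False using n by simp
      qed
    qed
  qed
  show ?thesis unfolding RC_def
  proof (intro conjI allI impI)
    show "0 < t n" for n by (rule tpos)
  next
    fix a :: real assume a: "0 < a \<and> a < 1"
    show "(\<lambda>n. GS (I n) (w n) (\<rho> n) ((1 + a) * t n)) \<longlonglongrightarrow> 0"
    proof (rule tendsto_sandwich[of "\<lambda>n. 0" _ _ "\<lambda>n. G n (real (nat \<lceil>(1 + a/2) * t n\<rceil>))"])
      show "\<forall>\<^sub>F n in sequentially. 0 \<le> GS (I n) (w n) (\<rho> n) ((1 + a) * t n)"
        using Gnn unfolding G_def by simp
      show "\<forall>\<^sub>F n in sequentially. GS (I n) (w n) (\<rho> n) ((1 + a) * t n) \<le> G n (real (nat \<lceil>(1 + a/2) * t n\<rceil>))"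
      proof (rule eventually_mono[OF tinf[of "2/a"]])
        fix n assume tn: "2 / a < t n"
        have "real (nat \<lceil>(1 + a/2) * t n\<rceil>) \<le> (1 + a/2) * t n + 1"
          using tpos[of n] a by (simp add: of_nat_nat)
        also have "\<dots> \<le> (1 + a) * t n"
        proof -
          have "2 < a * t n" using tn a by (simp add: field_simps)
          then show ?thesis by (simp add: algebra_simps)
        qed
        finally show "GS (I n) (w n) (\<rho> n) ((1 + a) * t n) \<le> G n (real (nat \<lceil>(1 + a/2) * t n\<rceil>))"
          using Ganti unfolding G_def by blast
      qed
      show "(\<lambda>n. G n (real (nat \<lceil>(1 + a/2) * t n\<rceil>))) \<longlonglongrightarrow> 0"
        using up[of "a/2"] a unfolding G_def by simp
    qed simp
  next
    fix a :: real assume a: "0 < a \<and> a < 1"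
    show "filterlim (\<lambda>n. GS (I n) (w n) (\<rho> n) ((1 - a) * t n)) at_top sequentially"
    proof (rule filterlim_at_top_mono[OF lo[of "a/2"]])
      show "0 < a/2" "a/2 < 1" using a by auto
      show "\<forall>\<^sub>F n in sequentially. GS (I n) (w n) (\<rho> n) (real (nat \<lfloor>(1 - a/2) * t n\<rfloor>)) \<le> GS (I n) (w n) (\<rho> n) ((1 - a) * t n)"
      proof (rule eventually_mono[OF tinf[of "2/a"]])
        fix n assume tn: "2 / a < t n"
        have nn: "0 \<le> (1 - a/2) * t n" using a tpos[of n] by simp
        have "(1 - a) * t n \<le> (1 - a/2) * t n - 1"
        proof -
          have "2 < a * t n" using tn a by (simp add: field_simps)
          then show ?thesis by (simp add: algebra_simps)
        qed
        also have "\<dots> \<le> real (nat \<lfloor>(1 - a/2) * t n\<rfloor>)"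
          using nn real_of_int_floor_gt_diff_one[of "(1 - a/2) * t n"] by (simp add: of_nat_nat)
        finally show "GS (I n) (w n) (\<rho> n) (real (nat \<lfloor>(1 - a/2) * t n\<rfloor>)) \<le> GS (I n) (w n) (\<rho> n) ((1 - a) * t n)"
          using Ganti unfolding G_def by blast
      qed
    qed
  qed
qed

lemma RC_to_disc:
  fixes I :: "nat \<Rightarrow> 'i set" and w \<rho> :: "nat \<Rightarrow> 'i \<Rightarrow> real"
  assumes wpos: "\<And>n i. i \<in> I n \<Longrightarrow> 0 \<le> w n i" and r0: "\<And>n i. i \<in> I n \<Longrightarrow> 0 \<le> \<rho> n i"
    and rc: "RC (\<lambda>n. GS (I n) (w n) (\<rho> n)) t" and a: "0 < a" "a < 1"
  shows "(\<lambda>n. GS (I n) (w n) (\<rho> n) (real (nat \<lceil>(1 + a) * t n\<rceil>))) \<longlonglongrightarrow> 0"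
    "filterlim (\<lambda>n. GS (I n) (w n) (\<rho> n) (real (nat \<lfloor>(1 - a) * t n\<rfloor>))) at_top sequentially"
proof -
  have Ganti: "GS (I n) (w n) (\<rho> n) v \<le> GS (I n) (w n) (\<rho> n) u" if "u \<le> v" for n u v
    by (rule GS_anti) (use wpos r0 that in auto)
  have tpos: "\<And>n. 0 < t n" and up: "(\<lambda>n. GS (I n) (w n) (\<rho> n) ((1 + a) * t n)) \<longlonglongrightarrow> 0"
    and lo: "filterlim (\<lambda>n. GS (I n) (w n) (\<rho> n) ((1 - a) * t n)) at_top sequentially"
    using rc a unfolding RC_def by auto
  show "(\<lambda>n. GS (I n) (w n) (\<rho> n) (real (nat \<lceil>(1 + a) * t n\<rceil>))) \<longlonglongrightarrow> 0"
  proof (rule tendsto_sandwich[of "\<lambda>n. 0" _ _ "\<lambda>n. GS (I n) (w n) (\<rho> n) ((1 + a) * t n)"])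
    show "\<forall>\<^sub>F n in sequentially. 0 \<le> GS (I n) (w n) (\<rho> n) (real (nat \<lceil>(1 + a) * t n\<rceil>))"
      by (intro always_eventually allI GS_nonneg) (use wpos in auto)
    show "\<forall>\<^sub>F n in sequentially. GS (I n) (w n) (\<rho> n) (real (nat \<lceil>(1 + a) * t n\<rceil>)) \<le> GS (I n) (w n) (\<rho> n) ((1 + a) * t n)"
      by (intro always_eventually allI Ganti real_nat_ceiling_ge)
  qed (use up in auto)
  show "filterlim (\<lambda>n. GS (I n) (w n) (\<rho> n) (real (nat \<lfloor>(1 - a) * t n\<rfloor>))) at_top sequentially"
  proof (rule filterlim_at_top_mono[OF lo])
    show "\<forall>\<^sub>F n in sequentially. GS (I n) (w n) (\<rho> n) ((1 - a) * t n) \<le> GS (I n) (w n) (\<rho> n) (real (nat \<lfloor>(1 - a) * t n\<rfloor>))"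
    proof (intro always_eventually allI Ganti)
      fix n
      have "0 \<le> (1 - a) * t n" using a tpos[of n] by simp
      then show "real (nat \<lfloor>(1 - a) * t n\<rfloor>) \<le> (1 - a) * t n" by (simp add: of_nat_nat)
    qed
  qed
qed

theorem corollary3p6:
  fixes S :: "nat \<Rightarrow> 'a set" and K :: "nat \<Rightarrow> 'a \<Rightarrow> 'a \<Rightarrow> real"
    and \<pi> :: "nat \<Rightarrow> 'a \<Rightarrow> real" and \<mu> :: "nat \<Rightarrow> 'a \<Rightarrow> real"
  assumes chain: "\<And>n. markov_kernel (S n) (K n)"
    and irr: "\<And>n. irreducible_chain (S n) (K n)"
    and rev: "\<And>n. reversible_chain (S n) (K n) (\<pi> n)"
    and init: "\<And>n. prob_on (S n) (\<mu> n)"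
    and lazy: "\<exists>c>1/2. \<forall>n. \<forall>x\<in>S n. K n x x \<ge> c"
    and norm: "filterlim (\<lambda>n. \<Sum>y\<in>S n. (\<mu> n y)\<^sup>2 / \<pi> n y) at_top sequentially"
    and mix: "\<exists>\<epsilon>0>0. filterlim (\<lambda>n. real (T2_disc (S n) (K n) (\<pi> n) (\<mu> n) \<epsilon>0)) at_top sequentially
                   \<or> filterlim (\<lambda>n. T2_cont (S n) (K n) (\<pi> n) (\<mu> n) \<epsilon>0) at_top sequentially"
  shows "L2_cutoff_disc S K \<pi> \<mu> \<longleftrightarrow> L2_cutoff_cont S K \<pi> \<mu>"
proof -
  obtain c where c: "c > 1/2" and lz: "\<And>n x. x \<in> S n \<Longrightarrow> c \<le> K n x x" using lazy by blast
  have mc: "mchain (S n) (K n) (\<pi> n) (\<mu> n) c" for n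
    by unfold_locales (use chain rev init c lz in auto)
  define P where "P = (\<lambda>n R w. finite R \<and> (\<forall>r\<in>R. 2 * c - 1 \<le> r \<and> r \<le> 1 \<and> 0 \<le> w r)
     \<and> (\<forall>m. d2_disc (S n) (K n) (\<pi> n) (\<mu> n) m = sqrt (GS R w (\<lambda>r. -2 * ln r) (real m)))
     \<and> (\<forall>t. d2_cont (S n) (K n) (\<pi> n) (\<mu> n) t = sqrt (GS R w (\<lambda>r. 2 * (1 - r)) t)))"
  have ex: "\<exists>R w. P n R w" for n unfolding P_def by (rule mchain.chain_rep[OF mc])
  define R where "R n = (SOME R. \<exists>w. P n R w)" for n
  define w where "w n = (SOME w. P n (R n) w)" for n
  have PRw: "P n (R n) (w n)" for n
  proof -
    have "\<exists>w. P n (R n) w" unfolding R_def using someI_ex[OF ex[of n]] .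
    then show ?thesis unfolding w_def by (rule someI_ex)
  qed
  define \<delta> where "\<delta> = 2 * c - 1"
  have dpos: "0 < \<delta>" using c \<delta>_def by simp
  have fin: "finite (R n)" for n using PRw[of n] unfolding P_def by auto
  have rng: "\<delta> \<le> r" "r \<le> 1" "0 \<le> w n r" if "r \<in> R n" for n r
    using PRw[of n] that unfolding P_def \<delta>_def by auto
  have dd: "d2_disc (S n) (K n) (\<pi> n) (\<mu> n) m = sqrt (GS (R n) (w n) (\<lambda>r. -2 * ln r) (real m))" for n m
    using PRw[of n] unfolding P_def by auto
  have dc: "d2_cont (S n) (K n) (\<pi> n) (\<mu> n) t = sqrt (GS (R n) (w n) (\<lambda>r. 2 * (1 - r)) t)" for n t
    using PRw[of n] unfolding P_def by auto
  note rt = rates[OF dpos rng(1,2)]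
  have wpos: "\<And>n r. r \<in> R n \<Longrightarrow> 0 \<le> w n r" using rng by blast
  have Gnn: "0 \<le> GS (R n) (w n) \<rho> u" for n \<rho> u by (rule GS_nonneg) (use wpos in auto)
  have tot: "filterlim (\<lambda>n. \<Sum>r\<in>R n. w n r) at_top sequentially"
  proof -
    have "(\<Sum>r\<in>R n. w n r) = (\<Sum>y\<in>S n. (\<mu> n y)\<^sup>2 / \<pi> n y) - 1" for n
    proof -
      have "sqrt (GS (R n) (w n) (\<lambda>r. -2 * ln r) (real 0)) = sqrt ((\<Sum>y\<in>S n. (\<mu> n y)\<^sup>2 / \<pi> n y) - 1)"
        using dd[of n 0] mchain.d2_disc0[OF mc[of n]] by simp
      then have "GS (R n) (w n) (\<lambda>r. -2 * ln r) 0 = (\<Sum>y\<in>S n. (\<mu> n y)\<^sup>2 / \<pi> n y) - 1" by simp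
      then show ?thesis by (simp add: GS_def)
    qed
    moreover have "filterlim (\<lambda>n. (\<Sum>y\<in>S n. (\<mu> n y)\<^sup>2 / \<pi> n y) - 1) at_top sequentially"
      using filterlim_tendsto_add_at_top[OF tendsto_const norm, of "-1"] by simp
    ultimately show ?thesis by simp
  qed
  define DC where "DC = (\<lambda>t::nat\<Rightarrow>real. (\<forall>n. t n > 0) \<and> (\<forall>a. 0 < a \<and> a < 1 \<longrightarrow>
        ((\<lambda>n. GS (R n) (w n) (\<lambda>r. -2 * ln r) (real (nat \<lceil>(1 + a) * t n\<rceil>))) \<longlonglongrightarrow> 0) \<and>
        filterlim (\<lambda>n. GS (R n) (w n) (\<lambda>r. -2 * ln r) (real (nat \<lfloor>(1 - a) * t n\<rfloor>))) at_top sequentially))"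
  have disc_iff: "L2_cutoff_disc S K \<pi> \<mu> \<longleftrightarrow> (\<exists>t. DC t)"
    unfolding L2_cutoff_disc_def dd DC_def
    by (simp only: sqrt_tendsto0_iff[OF Gnn] sqrt_attop_iff[OF Gnn])
  have cont_iff: "L2_cutoff_cont S K \<pi> \<mu> \<longleftrightarrow> (\<exists>t. RC (\<lambda>n. GS (R n) (w n) (\<lambda>r. 2 * (1 - r))) t)"
    unfolding L2_cutoff_cont_def dc RC_def
    by (simp only: sqrt_tendsto0_iff[OF Gnn] sqrt_attop_iff[OF Gnn])
  show ?thesis
  proof
    assume "L2_cutoff_disc S K \<pi> \<mu>"
    then obtain t where DCt: "DC t" unfolding disc_iff by (rule exE)
    have tpos: "\<And>n. t n > 0" using DCt unfolding DC_def by simp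
    have lim: "\<And>a. 0 < a \<Longrightarrow> a < 1 \<Longrightarrow>
        ((\<lambda>n. GS (R n) (w n) (\<lambda>r. -2 * ln r) (real (nat \<lceil>(1 + a) * t n\<rceil>))) \<longlonglongrightarrow> 0) \<and>
        filterlim (\<lambda>n. GS (R n) (w n) (\<lambda>r. -2 * ln r) (real (nat \<lfloor>(1 - a) * t n\<rfloor>))) at_top sequentially"
      using DCt unfolding DC_def by simp
    have "RC (\<lambda>n. GS (R n) (w n) (\<lambda>r. -2 * ln r)) t"
    proof (rule disc_to_RC[of R w "\<lambda>n r. -2 * ln r" "-2 * ln \<delta>"])
      show "\<And>n i. i \<in> R n \<Longrightarrow> 0 \<le> w n i" by (rule wpos)
      show "\<And>n i. i \<in> R n \<Longrightarrow> 0 \<le> -2 * ln i" using rt(5) by blast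
      show "\<And>n i. i \<in> R n \<Longrightarrow> -2 * ln i \<le> -2 * ln \<delta>" using rt(3) by blast
      show "filterlim (\<lambda>n. \<Sum>i\<in>R n. w n i) at_top sequentially" by (rule tot)
      show "\<And>n. 0 < t n" by (rule tpos)
      show "\<And>a. 0 < a \<Longrightarrow> a < 1 \<Longrightarrow> (\<lambda>n. GS (R n) (w n) (\<lambda>r. -2 * ln r) (real (nat \<lceil>(1 + a) * t n\<rceil>))) \<longlonglongrightarrow> 0"
        using lim by simp
      show "\<And>a. 0 < a \<Longrightarrow> a < 1 \<Longrightarrow> filterlim (\<lambda>n. GS (R n) (w n) (\<lambda>r. -2 * ln r) (real (nat \<lfloor>(1 - a) * t n\<rfloor>))) at_top sequentially"
        using lim by simp
    qed
    then have "\<exists>t'. RC (\<lambda>n. GS (R n) (w n) (\<lambda>r. 2 * (1 - r))) t'"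
    proof (rule transfer[of R w "\<lambda>n r. 2 * (1 - r)" 1 "1/\<delta>" "\<lambda>n r. -2 * ln r" "-2 * ln \<delta>", rotated -1])
      show "\<And>n. finite (R n)" by (rule fin)
      show "\<And>n i. i \<in> R n \<Longrightarrow> 0 \<le> w n i" by (rule wpos)
      show "\<And>n i. i \<in> R n \<Longrightarrow> 0 \<le> 2 * (1 - i)" using rt(4) by blast
      show "(0::real) < 1" by simp
      show "0 < 1 / \<delta>" using dpos by simp
      show "\<And>n i. i \<in> R n \<Longrightarrow> 1 * (2 * (1 - i)) \<le> -2 * ln i" using rt(1) by simp
      show "\<And>n i. i \<in> R n \<Longrightarrow> -2 * ln i \<le> 1 / \<delta> * (2 * (1 - i))"
      proof -
        fix n i assume i: "i \<in> R n"
        have "\<delta> * (-2 * ln i) \<le> 2 * (1 - i)" using rt(2)[OF i i] .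
        then show "-2 * ln i \<le> 1 / \<delta> * (2 * (1 - i))" using dpos by (simp add: field_simps)
      qed
      show "\<And>n i. i \<in> R n \<Longrightarrow> -2 * ln i \<le> -2 * ln \<delta>" using rt(3) by blast
      show "filterlim (\<lambda>n. \<Sum>i\<in>R n. w n i) at_top sequentially" by (rule tot)
    qed
    then show "L2_cutoff_cont S K \<pi> \<mu>" unfolding cont_iff .
  next
    assume "L2_cutoff_cont S K \<pi> \<mu>"
    then obtain t where "RC (\<lambda>n. GS (R n) (w n) (\<lambda>r. 2 * (1 - r))) t" unfolding cont_iff by blast
    then have "\<exists>t'. RC (\<lambda>n. GS (R n) (w n) (\<lambda>r. -2 * ln r)) t'"
    proof (rule transfer[of R w "\<lambda>n r. -2 * ln r" \<delta> 1 "\<lambda>n r. 2 * (1 - r)" 2, rotated -1])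
      show "\<And>n. finite (R n)" by (rule fin)
      show "\<And>n i. i \<in> R n \<Longrightarrow> 0 \<le> w n i" by (rule wpos)
      show "\<And>n i. i \<in> R n \<Longrightarrow> 0 \<le> -2 * ln i" using rt(5) by blast
      show "0 < \<delta>" by (rule dpos)
      show "(0::real) < 1" by simp
      show "\<And>n i. i \<in> R n \<Longrightarrow> \<delta> * (-2 * ln i) \<le> 2 * (1 - i)" using rt(2) by blast
      show "\<And>n i. i \<in> R n \<Longrightarrow> 2 * (1 - i) \<le> 1 * (-2 * ln i)" using rt(1) by simp
      show "\<And>n i. i \<in> R n \<Longrightarrow> 2 * (1 - i) \<le> 2" using rt(6) by blast
      show "filterlim (\<lambda>n. \<Sum>i\<in>R n. w n i) at_top sequentially" by (rule tot)
    qed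
    then obtain t' where rc: "RC (\<lambda>n. GS (R n) (w n) (\<lambda>r. -2 * ln r)) t'" by blast
    have "\<forall>n. t' n > 0" using rc unfolding RC_def by auto
    moreover have "\<forall>a. 0 < a \<and> a < 1 \<longrightarrow>
        ((\<lambda>n. GS (R n) (w n) (\<lambda>r. -2 * ln r) (real (nat \<lceil>(1 + a) * t' n\<rceil>))) \<longlonglongrightarrow> 0) \<and>
        filterlim (\<lambda>n. GS (R n) (w n) (\<lambda>r. -2 * ln r) (real (nat \<lfloor>(1 - a) * t' n\<rfloor>))) at_top sequentially"
    proof (intro allI impI)
      fix a :: real assume a: "0 < a \<and> a < 1"
      have w0: "\<And>n i. i \<in> R n \<Longrightarrow> 0 \<le> w n i" by (rule wpos)
      have r0: "\<And>n i. i \<in> R n \<Longrightarrow> 0 \<le> -2 * ln i" using rt(5) by blast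
      show "((\<lambda>n. GS (R n) (w n) (\<lambda>r. -2 * ln r) (real (nat \<lceil>(1 + a) * t' n\<rceil>))) \<longlonglongrightarrow> 0) \<and>
        filterlim (\<lambda>n. GS (R n) (w n) (\<lambda>r. -2 * ln r) (real (nat \<lfloor>(1 - a) * t' n\<rfloor>))) at_top sequentially"
      proof
        show "(\<lambda>n. GS (R n) (w n) (\<lambda>r. -2 * ln r) (real (nat \<lceil>(1 + a) * t' n\<rceil>))) \<longlonglongrightarrow> 0"
          by (rule RC_to_disc(1)[of R w "\<lambda>n r. -2 * ln r" t' a]) (use w0 r0 rc a in auto)
        show "filterlim (\<lambda>n. GS (R n) (w n) (\<lambda>r. -2 * ln r) (real (nat \<lfloor>(1 - a) * t' n\<rfloor>))) at_top sequentially"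
          by (rule RC_to_disc(2)[of R w "\<lambda>n r. -2 * ln r" t' a]) (use w0 r0 rc a in auto)
      qed
    qed
    ultimately have "DC t'" unfolding DC_def by (rule conjI)
    then show "L2_cutoff_disc S K \<pi> \<mu>" unfolding disc_iff by blast
  qed
qed

end
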